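(* For every $\mathcal{V}$-poset $P$, \[\mathcal{P}(P;x,y)=L(P;x,y):=\sum_{A\in\mathcal{A}(P)}x^{b(A)}y^{s(A)}.\]
   Context: All posets are finite. A $\mathcal{V}$-poset is a poset generated from the empty poset by repeatedly applying: disjoint union of $\mathcal{V}$-posets, adding a new greatest element, adding a new least element. The polynomial $\mathcal{P}$ is defined on $\mathcal{V}$-posets by: $\mathcal{P}(\emptyset;x,y)=1$; $\mathcal{P}(\bullet;x,y)=x$ for the one-element poset; $\mathcal{P}(\bigcup_iP_i;x,y)=\prod_i\mathcal{P}(P_i;x,y)$ for a disjoint union; and $\mathcal{P}(P\cup\{g\};x,y)=\mathcal{P}(P\cup\{\ell\};x,y)=\mathcal{P}(P;x,y)+y^{|P|}$ where $g$ (resp. $\ell$) is a new greatest (resp. least) element. An element $x$ is basic if: (B.1) there are no two incomparable elements $u,v$ with $x>u$ and $x>v$; (B.2) there are no two incomparable elements $u,v$ with $x<u$ and $x<v$; (B.3) there is no element $u$ with $u<x$ such that for all $w\neq u,x$ one has ($u\ge w\iff x\ge w$) and ($u\le w\iff x\le w$). An element is associated to a set $B$ of basic elements if it is comparable to every element of $B$ and incomparable to every other basic element. A non-basic element $u$ is upper if $u>b$ for some basic $b$, and lower if $u<b$ for some basic $b$. For $a\in P$: if $a$ is basic, $P_a=\emptyset$; otherwise let $B$ be the set of basic elements to which $a$ is associated; if $a$ is lower, $P_a=\{b\in P: a<b,\ \text{there is no } c \text{ with } c<b \text{ and } c \text{ incomparable to } a\}$; if $a$ is upper, $P_a=\{b\in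 P: a>b,\ \text{there is no } c \text{ with } c>b \text{ and } c \text{ incomparable to } a\}\setminus\{\ell\in P: \ell \text{ is a lower element associated to } B\}$. $\mathcal{A}(P)$ is the set of maximal antichains of $P$ (antichain: pairwise incomparable elements; maximal: not properly contained in another antichain). For $A\in\mathcal{A}(P)$, $b(A)$ is the number of basic elements in $A$ and $s(A)=\sum_{a\in A}|P_a|$. *)

theory Defs
  imports Main
begin

text \<open>A construction term of a V-poset: the empty poset, a disjoint union
of two V-posets, adding a new greatest element, adding a new least element.
(Finite disjoint unions are iterated binary ones.)\<close>

datatype vterm = VEmpty | VUnion vterm vterm | VTop vterm | VBot vterm

text \<open>Concrete realisation: elements are lists of naturals (tags).\<close>

fun velems :: "vterm \<Rightarrow> nat list set" where
  "velems VEmpty = {}"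
| "velems (VUnion s t) = Cons 0 ` velems s \<union> Cons 1 ` velems t"
| "velems (VTop t) = Cons 0 ` velems t \<union> {[1]}"
| "velems (VBot t) = Cons 0 ` velems t \<union> {[1]}"

fun vle :: "vterm \<Rightarrow> nat list \<Rightarrow> nat list \<Rightarrow> bool" where
  "vle VEmpty a b = False"
| "vle (VUnion s t) a b =
     ((\<exists>a' b'. a = 0 # a' \<and> b = 0 # b' \<and> vle s a' b') \<or>
      (\<exists>a' b'. a = 1 # a' \<and> b = 1 # b' \<and> vle t a' b'))"
| "vle (VTop t) a b =
     ((a \<in> velems (VTop t) \<and> b = [1]) \<or>
      (\<exists>a' b'. a = 0 # a' \<and> b = 0 # b' \<and> vle t a' b'))"
| "vle (VBot t) a b =
     ((a = [1] \<and> b \<in> velems (VBot t)) \<or>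
      (\<exists>a' b'. a = 0 # a' \<and> b = 0 # b' \<and> vle t a' b'))"

text \<open>The polynomial \<open>\<P>\<close>, evaluated in an arbitrary commutative ring.
Adding a greatest/least element to the empty poset yields the one-element
poset, whose value is \<open>x\<close>.\<close>

fun vpoly :: "vterm \<Rightarrow> 'a::comm_ring_1 \<Rightarrow> 'a \<Rightarrow> 'a" where
  "vpoly VEmpty x y = 1"
| "vpoly (VUnion s t) x y = vpoly s x y * vpoly t x y"
| "vpoly (VTop t) x y =
     (if velems t = {} then x else vpoly t x y + y ^ card (velems t))"
| "vpoly (VBot t) x y =
     (if velems t = {} then x else vpoly t x y + y ^ card (velems t))"

definition plt :: "('b \<Rightarrow> 'b \<Rightarrow> bool) \<Rightarrow> 'b \<Rightarrow> 'b \<Rightarrow> bool" where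
  "plt le u v \<longleftrightarrow> le u v \<and> u \<noteq> v"

definition pcomp :: "('b \<Rightarrow> 'b \<Rightarrow> bool) \<Rightarrow> 'b \<Rightarrow> 'b \<Rightarrow> bool" where
  "pcomp le u v \<longleftrightarrow> le u v \<or> le v u"

definition basic :: "'b set \<Rightarrow> ('b \<Rightarrow> 'b \<Rightarrow> bool) \<Rightarrow> 'b \<Rightarrow> bool" where
  "basic S le x \<longleftrightarrow> x \<in> S \<and>
     \<not> (\<exists>u\<in>S. \<exists>v\<in>S. \<not> pcomp le u v \<and> plt le u x \<and> plt le v x) \<and>
     \<not> (\<exists>u\<in>S. \<exists>v\<in>S. \<not> pcomp le u v \<and> plt le x u \<and> plt le x v) \<and>
     \<not> (\<exists>u\<in>S. plt le u x \<and>
          (\<forall>w\<in>S. w \<noteq> u \<and> w \<noteq> x \<longrightarrow>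
             ((le w u \<longleftrightarrow> le w x) \<and> (le u w \<longleftrightarrow> le x w))))"

definition assoc_basic :: "'b set \<Rightarrow> ('b \<Rightarrow> 'b \<Rightarrow> bool) \<Rightarrow> 'b \<Rightarrow> 'b set" where
  "assoc_basic S le a = {b \<in> S. basic S le b \<and> pcomp le a b}"

definition upper :: "'b set \<Rightarrow> ('b \<Rightarrow> 'b \<Rightarrow> bool) \<Rightarrow> 'b \<Rightarrow> bool" where
  "upper S le u \<longleftrightarrow> u \<in> S \<and> \<not> basic S le u \<and> (\<exists>b\<in>S. basic S le b \<and> plt le b u)"

definition lower :: "'b set \<Rightarrow> ('b \<Rightarrow> 'b \<Rightarrow> bool) \<Rightarrow> 'b \<Rightarrow> bool" where
  "lower S le u \<longleftrightarrow> u \<in> S \<and> \<not> basic S le u \<and> (\<exists>b\<in>S. basic S le b \<and> plt le u b)"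

definition Pset :: "'b set \<Rightarrow> ('b \<Rightarrow> 'b \<Rightarrow> bool) \<Rightarrow> 'b \<Rightarrow> 'b set" where
  "Pset S le a =
    (if basic S le a then {}
     else if lower S le a then
       {b \<in> S. plt le a b \<and> \<not> (\<exists>c\<in>S. plt le c b \<and> \<not> pcomp le c a)}
     else if upper S le a then
       {b \<in> S. plt le b a \<and> \<not> (\<exists>c\<in>S. plt le b c \<and> \<not> pcomp le c a)}
       - {l \<in> S. lower S le l \<and> assoc_basic S le l = assoc_basic S le a}
     else {})"

definition max_antichain :: "'b set \<Rightarrow> ('b \<Rightarrow> 'b \<Rightarrow> bool) \<Rightarrow> 'b set \<Rightarrow> bool" where
  "max_antichain S le A \<longleftrightarrow> A \<subseteq> S \<and>
     (\<forall>u\<in>A. \<forall>v\<in>A. u \<noteq> v \<longrightarrow> \<not> pcomp le u v) \<and>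
     (\<forall>z\<in>S - A. \<exists>a\<in>A. pcomp le z a)"

definition Lpoly :: "'b set \<Rightarrow> ('b \<Rightarrow> 'b \<Rightarrow> bool) \<Rightarrow> 'a::comm_ring_1 \<Rightarrow> 'a \<Rightarrow> 'a" where
  "Lpoly S le x y =
    (\<Sum>A\<in>{A. max_antichain S le A}.
       x ^ card {a \<in> A. basic S le a} * y ^ (\<Sum>a\<in>A. card (Pset S le a)))"

end

theory Submission
  imports Defs
begin

definition po :: "'b set \<Rightarrow> ('b \<Rightarrow> 'b \<Rightarrow> bool) \<Rightarrow> bool" where
  "po S le \<longleftrightarrow> (\<forall>a\<in>S. le a a) \<and> (\<forall>a\<in>S. \<forall>b\<in>S. le a b \<and> le b a \<longrightarrow> a = b)
     \<and> (\<forall>a\<in>S. \<forall>b\<in>S. \<forall>c\<in>S. le a b \<and> le b c \<longrightarrow> le a c)"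

definition ischain :: "'b set \<Rightarrow> ('b \<Rightarrow> 'b \<Rightarrow> bool) \<Rightarrow> bool" where
  "ischain S le \<longleftrightarrow> (\<forall>u\<in>S. \<forall>v\<in>S. pcomp le u v)"

definition allb :: "'b set \<Rightarrow> ('b \<Rightarrow> 'b \<Rightarrow> bool) \<Rightarrow> 'b set" where
  "allb S le = {b\<in>S. basic S le b}"

definition univ :: "'b set \<Rightarrow> ('b \<Rightarrow> 'b \<Rightarrow> bool) \<Rightarrow> 'b \<Rightarrow> bool" where
  "univ S le a \<longleftrightarrow> (\<forall>c\<in>S. pcomp le a c)"

definition UL :: "'b set \<Rightarrow> ('b \<Rightarrow> 'b \<Rightarrow> bool) \<Rightarrow> 'b set" where
  "UL S le = {a\<in>S. lower S le a \<and> univ S le a}"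

definition MA :: "'b set \<Rightarrow> ('b \<Rightarrow> 'b \<Rightarrow> bool) \<Rightarrow> 'b set set" where
  "MA S le = {A. max_antichain S le A}"

definition Fw :: "'b set \<Rightarrow> ('b \<Rightarrow> 'b \<Rightarrow> bool) \<Rightarrow> 'a::comm_ring_1 \<Rightarrow> 'a \<Rightarrow> 'b set \<Rightarrow> 'a" where
  "Fw S le x y A = x ^ card {a \<in> A. basic S le a} * y ^ (\<Sum>a\<in>A. card (Pset S le a))"

definition Inv0 :: "'b set \<Rightarrow> ('b \<Rightarrow> 'b \<Rightarrow> bool) \<Rightarrow> bool" where
  "Inv0 S le \<longleftrightarrow> finite S \<and> po S le \<and> (S \<noteq> {} \<longrightarrow> allb S le \<noteq> {}) \<and>
     (\<forall>l\<in>S. lower S le l \<and> assoc_basic S le l = allb S le \<longrightarrow> univ S le l)"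

definition InvS :: "'b set \<Rightarrow> ('b \<Rightarrow> 'b \<Rightarrow> bool) \<Rightarrow> 'a::comm_ring_1 \<Rightarrow> bool" where
  "InvS S le y \<longleftrightarrow> (\<Sum>a\<in>UL S le. y ^ card (Pset S le a)) = (\<Sum>k\<in>{card S - card (UL S le)..<card S}. y ^ k)"

lemma Lpoly_MA: "Lpoly S le x y = sum (Fw S le x y) (MA S le)"
  unfolding Lpoly_def MA_def Fw_def by simp

lemma MA_Pow: "MA S le \<subseteq> Pow S"
  unfolding MA_def max_antichain_def by auto

lemma finite_MA: "finite S \<Longrightarrow> finite (MA S le)"
  using MA_Pow by (metis finite_Pow_iff finite_subset)

lemma po_sub: "po S le \<Longrightarrow> F \<subseteq> S \<Longrightarrow> po F le"
  unfolding po_def by blast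

lemma chain_max:
  assumes "finite F" "F \<noteq> {}" "po S le" "ischain S le" "F \<subseteq> S"
  shows "\<exists>m\<in>F. \<forall>b\<in>F. le b m"
  using assms
proof (induction F rule: finite_ne_induct)
  case (singleton x) then show ?case unfolding po_def by auto
next
  case (insert x F)
  then obtain m where m: "m \<in> F" "\<forall>b\<in>F. le b m" by auto
  show ?case
  proof (cases "le m x")
    case True
    have "\<forall>b\<in>insert x F. le b x"
    proof
      fix b assume b: "b \<in> insert x F"
      show "le b x"
      proof (cases "b = x")
        case True then show ?thesis using insert.prems unfolding po_def by auto
      next
        case False then have "b \<in> F" using b by auto
        then show ?thesis using m True insert.prems unfolding po_def by blast
      qed
    qed
    then show ?thesis by blast
  next
    case False
    then have "le x m" using insert.prems m unfolding ischain_def pcomp_def by auto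
    then show ?thesis using m by auto
  qed
qed

lemma chain_min:
  assumes "finite F" "F \<noteq> {}" "po S le" "ischain S le" "F \<subseteq> S"
  shows "\<exists>m\<in>F. \<forall>b\<in>F. le m b"
  using assms
proof (induction F rule: finite_ne_induct)
  case (singleton x) then show ?case unfolding po_def by auto
next
  case (insert x F)
  then obtain m where m: "m \<in> F" "\<forall>b\<in>F. le m b" by auto
  show ?case
  proof (cases "le x m")
    case True
    have "\<forall>b\<in>insert x F. le x b"
    proof
      fix b assume b: "b \<in> insert x F"
      show "le x b"
      proof (cases "b = x")
        case True then show ?thesis using insert.prems unfolding po_def by auto
      next
        case False then have "b \<in> F" using b by auto
        then show ?thesis using m True insert.prems unfolding po_def by blast
      qed
    qed
    then show ?thesis by blast
  next
    case False
    then have "le m x" using insert.prems m unfolding ischain_def pcomp_def by auto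
    then show ?thesis using m by auto
  qed
qed

lemma poD:
  assumes "po S le"
  shows "a \<in> S \<Longrightarrow> le a a"
    and "a \<in> S \<Longrightarrow> b \<in> S \<Longrightarrow> le a b \<Longrightarrow> le b a \<Longrightarrow> a = b"
    and "a \<in> S \<Longrightarrow> b \<in> S \<Longrightarrow> c \<in> S \<Longrightarrow> le a b \<Longrightarrow> le b c \<Longrightarrow> le a c"
  using assms unfolding po_def by blast+

lemma chain_facts:
  assumes fin: "finite S" and po: "po S le" and ch: "ischain S le"
    and mS: "m \<in> S" and mmin: "\<forall>b\<in>S. le m b"
  shows "basic S le m"
    and "a \<in> S \<Longrightarrow> a \<noteq> m \<Longrightarrow> \<not> basic S le a"
    and "\<not> lower S le a"
    and "a \<in> S \<Longrightarrow> a \<noteq> m \<Longrightarrow> Pset S le a = {b\<in>S. plt le b a}"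
    and "Pset S le m = {}"
proof -
  note rf = poD(1)[OF po] and an = poD(2)[OF po] and tr = poD(3)[OF po]
  have nlt: "\<not> plt le u m" if "u \<in> S" for u
    using that mS mmin an unfolding plt_def by blast
  show bm: "basic S le m"
    using mS nlt ch[unfolded ischain_def] unfolding basic_def by blast
  have nb: "\<not> basic S le a" if aS: "a \<in> S" and am: "a \<noteq> m" for a
  proof -
    let ?F = "{b\<in>S. plt le b a}"
    have "m \<in> ?F" using mS mmin aS am unfolding plt_def by auto
    then obtain p where pF: "p \<in> ?F" and pmax: "\<forall>b\<in>?F. le b p"
      using chain_max[of ?F S le] fin po ch by (metis (no_types, lifting) empty_iff finite_subset mem_Collect_eq subsetI)
    have pS: "p \<in> S" and pa: "le p a" "p \<noteq> a" using pF unfolding plt_def by auto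
    have "\<forall>w\<in>S. w \<noteq> p \<and> w \<noteq> a \<longrightarrow> ((le w p \<longleftrightarrow> le w a) \<and> (le p w \<longleftrightarrow> le a w))"
    proof (intro ballI impI conjI iffI)
      fix w assume wS: "w \<in> S" and w: "w \<noteq> p \<and> w \<noteq> a"
      { assume "le w p" then show "le w a" using tr[OF wS pS aS] pa by blast }
      { assume "le w a" then have "w \<in> ?F" using wS w unfolding plt_def by auto
        then show "le w p" using pmax by blast }
      { assume "le a w" then show "le p w" using tr[OF pS aS wS] pa by blast }
      { assume pw: "le p w"
        show "le a w"
        proof (rule ccontr)
          assume "\<not> le a w"
          then have "le w a" using ch wS aS unfolding ischain_def pcomp_def by blast
          then have "w \<in> ?F" using wS w unfolding plt_def by auto
          then have "le w p" using pmax by blast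
          then show False using an[OF wS pS] pw w by blast
        qed }
    qed
    moreover have "plt le p a" using pa unfolding plt_def by auto
    ultimately show ?thesis unfolding basic_def using pS by blast
  qed
  then show "a \<in> S \<Longrightarrow> a \<noteq> m \<Longrightarrow> \<not> basic S le a" .
  show nl: "\<not> lower S le a" for a
  proof
    assume "lower S le a"
    then obtain b where "b \<in> S" "basic S le b" "plt le a b" "a \<in> S" unfolding lower_def by blast
    then show False using nb[of b] mmin an[of a m] mS unfolding plt_def by blast
  qed
  show "Pset S le m = {}" using bm unfolding Pset_def by simp
  assume aS: "a \<in> S" and am: "a \<noteq> m"
  have up: "upper S le a" unfolding upper_def using nb[OF aS am] aS bm mS mmin am unfolding plt_def by blast
  show "Pset S le a = {b\<in>S. plt le b a}"
    unfolding Pset_def using aS nb[OF aS am] nl up ch unfolding ischain_def lower_def by auto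
qed

lemma chain_MA:
  assumes ch: "ischain S le" and ne: "S \<noteq> {}"
  shows "MA S le = (\<lambda>a. {a}) ` S"
proof
  show "MA S le \<subseteq> (\<lambda>a. {a}) ` S"
  proof
    fix A assume "A \<in> MA S le"
    then have AS: "A \<subseteq> S" and ac: "\<forall>u\<in>A. \<forall>v\<in>A. u \<noteq> v \<longrightarrow> \<not> pcomp le u v"
      and mx: "\<forall>z\<in>S - A. \<exists>a\<in>A. pcomp le z a"
      unfolding MA_def max_antichain_def by auto
    have "A \<noteq> {}" using mx ne by auto
    then obtain a where aA: "a \<in> A" by auto
    have "A = {a}" using aA ac AS ch unfolding ischain_def by blast
    then show "A \<in> (\<lambda>a. {a}) ` S" using aA AS by auto
  qed
next
  show "(\<lambda>a. {a}) ` S \<subseteq> MA S le"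
    using ch unfolding MA_def max_antichain_def ischain_def by auto
qed

lemma sum_geom_telescope:
  fixes y :: "'a::comm_ring_1"
  shows "m \<le> n \<Longrightarrow> (y - 1) * (\<Sum>k\<in>{m..<n}. y ^ k) = y ^ n - y ^ m"
proof (induction n)
  case 0 then show ?case by simp
next
  case (Suc n)
  show ?case
  proof (cases "m = Suc n")
    case True then show ?thesis by simp
  next
    case False
    then have "m \<le> n" using Suc.prems by auto
    then have "(y - 1) * (\<Sum>k\<in>{m..<Suc n}. y ^ k) = (y - 1) * (\<Sum>k\<in>{m..<n}. y ^ k) + (y - 1) * y ^ n"
      by (simp add: sum.atLeastLessThan_Suc distrib_left)
    also have "\<dots> = y ^ Suc n - y ^ m" using Suc.IH[OF \<open>m \<le> n\<close>] by (simp add: algebra_simps)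
    finally show ?thesis .
  qed
qed

lemma chain_L:
  fixes x y :: "'a::comm_ring_1"
  assumes fin: "finite S" and po: "po S le" and ch: "ischain S le" and ne: "S \<noteq> {}"
  shows "Inv0 S le \<and> InvS S le y \<and> Lpoly S le x y = x + (\<Sum>k\<in>{1..<card S}. y ^ k)"
proof -
  note rf = poD(1)[OF po] and an = poD(2)[OF po] and tr = poD(3)[OF po]
  obtain m where mS: "m \<in> S" and mmin: "\<forall>b\<in>S. le m b"
    using chain_min[OF fin ne po ch] by blast
  note cf = chain_facts[OF fin po ch mS mmin]
  have UL: "UL S le = {}" using cf(3) unfolding UL_def by auto
  have inv0: "Inv0 S le"
    unfolding Inv0_def allb_def using fin po cf(1) mS cf(3) by auto
  have invs: "InvS S le y" unfolding InvS_def UL by simp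
  define r where "r a = card {b\<in>S. plt le b a}" for a
  have rlt: "r a < r b" if aS: "a \<in> S" and bS: "b \<in> S" and ab: "plt le a b" for a b
  proof -
    have "{c\<in>S. plt le c a} \<subset> {c\<in>S. plt le c b}"
    proof
      show "{c\<in>S. plt le c a} \<subseteq> {c\<in>S. plt le c b}"
      proof
        fix c assume "c \<in> {c\<in>S. plt le c a}"
        then have cS: "c \<in> S" and ca: "le c a" "c \<noteq> a" unfolding plt_def by auto
        have "le c b" using tr[OF cS aS bS] ca ab unfolding plt_def by auto
        moreover have "c \<noteq> b" using an[OF aS bS] ca ab unfolding plt_def by auto
        ultimately show "c \<in> {c\<in>S. plt le c b}" using cS unfolding plt_def by auto
      qed
      show "{c\<in>S. plt le c a} \<noteq> {c\<in>S. plt le c b}"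
        using aS ab unfolding plt_def by auto
    qed
    then show ?thesis unfolding r_def by (intro psubset_card_mono) (use fin in auto)
  qed
  have inj: "inj_on r S"
  proof (rule inj_onI)
    fix a b assume aS: "a \<in> S" and bS: "b \<in> S" and e: "r a = r b"
    show "a = b"
    proof (rule ccontr)
      assume "a \<noteq> b"
      then have "plt le a b \<or> plt le b a" using ch aS bS unfolding ischain_def pcomp_def plt_def by auto
      then show False using rlt aS bS e by fastforce
    qed
  qed
  have rS: "r ` S = {0..<card S}"
  proof (rule card_subset_eq)
    show "r ` S \<subseteq> {0..<card S}"
    proof
      fix k assume "k \<in> r ` S"
      then obtain a where aS: "a \<in> S" and k: "k = r a" by auto
      have "{b\<in>S. plt le b a} \<subseteq> S - {a}" unfolding plt_def by auto
      then have "r a \<le> card (S - {a})" unfolding r_def using fin by (intro card_mono) auto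
      also have "\<dots> < card S" using fin aS by (simp add: card_Diff_singleton) (metis card_gt_0_iff diff_less empty_iff zero_less_one Suc_eq_plus1 One_nat_def)
      finally show "k \<in> {0..<card S}" using k by auto
    qed
    show "card (r ` S) = card {0..<card S}" using card_image[OF inj] by simp
  qed simp
  have "{b\<in>S. plt le b m} = {}" using mmin an mS unfolding plt_def by blast
  then have rm: "r m = 0" unfolding r_def by (metis card.empty)
  have Fw1: "Fw S le x y {a} = (if a = m then x else y ^ r a)" if aS: "a \<in> S" for a
  proof -
  have e: "{b. b = a \<and> basic S le b} = (if basic S le a then {a} else {})" by auto
  show ?thesis
  proof (cases "a = m")
    case True
    have e: "{aa. aa = m \<and> basic S le aa} = {m}" using True cf(1) by auto
    show ?thesis using cf(5) True unfolding Fw_def by (simp add: e)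
  next
    case False
    have e: "{aa. aa = a \<and> basic S le aa} = {}" using cf(2)[OF aS False] by auto
    show ?thesis using cf(4)[OF aS False] False unfolding Fw_def r_def by (simp add: e)
  qed
  qed
  have "Lpoly S le x y = (\<Sum>a\<in>S. Fw S le x y {a})"
    unfolding Lpoly_MA chain_MA[OF ch ne] by (subst sum.reindex) (auto simp: inj_on_def)
  also have "\<dots> = Fw S le x y {m} + (\<Sum>a\<in>S - {m}. Fw S le x y {a})"
    using fin mS by (simp add: sum.remove)
  also have "\<dots> = x + (\<Sum>a\<in>S - {m}. y ^ r a)" using Fw1 mS by simp
  also have "(\<Sum>a\<in>S - {m}. y ^ r a) = (\<Sum>k\<in>r ` (S - {m}). y ^ k)"
    using inj by (subst sum.reindex) (auto intro: inj_on_subset)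
  also have "r ` (S - {m}) = {1..<card S}"
    using inj_on_image_set_diff[OF inj, of S "{m}"] rS rm mS by auto
  finally show ?thesis using inv0 invs by simp
qed

lemma Inv0D: "Inv0 S le \<Longrightarrow> finite S" "Inv0 S le \<Longrightarrow> po S le"
  "Inv0 S le \<Longrightarrow> S \<noteq> {} \<Longrightarrow> allb S le \<noteq> {}"
  "Inv0 S le \<Longrightarrow> l \<in> S \<Longrightarrow> lower S le l \<Longrightarrow> assoc_basic S le l = allb S le \<Longrightarrow> univ S le l"
  unfolding Inv0_def by blast+

lemma univ_assoc: "univ S le a \<Longrightarrow> assoc_basic S le a = allb S le"
  unfolding univ_def assoc_basic_def allb_def by auto

lemma Pset_sub: "Pset S le a \<subseteq> S"
  unfolding Pset_def by auto

lemma finite_Pset: "finite S \<Longrightarrow> finite (Pset S le a)"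
  by (rule finite_subset[OF Pset_sub])

lemma univ_single_MA: "a \<in> S \<Longrightarrow> univ S le a \<Longrightarrow> {a} \<in> MA S le"
  unfolding MA_def max_antichain_def univ_def pcomp_def by auto

lemma univ_in_MA: "A \<in> MA S le \<Longrightarrow> a \<in> A \<Longrightarrow> univ S le a \<Longrightarrow> A = {a}"
proof -
  assume A: "A \<in> MA S le" and aA: "a \<in> A" and u: "univ S le a"
  have AS: "A \<subseteq> S" and ac: "\<forall>u\<in>A. \<forall>v\<in>A. u \<noteq> v \<longrightarrow> \<not> pcomp le u v"
    using A unfolding MA_def max_antichain_def by auto
  have "b = a" if "b \<in> A" for b
  proof (rule ccontr)
    assume "b \<noteq> a"
    then have "\<not> pcomp le a b" using ac aA that by metis
    moreover have "pcomp le a b" using u that AS unfolding univ_def by blast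
    ultimately show False by blast
  qed
  then show "A = {a}" using aA by blast
qed

lemma sum_shift_pow:
  fixes y :: "'a::comm_ring_1"
  shows "y * (\<Sum>k\<in>{m..<n}. y ^ k) = (\<Sum>k\<in>{Suc m..<Suc n}. y ^ k)"
  by (subst sum.shift_bounds_Suc_ivl) (simp add: sum_distrib_left)

locale topext =
  fixes S :: "'b set" and le :: "'b \<Rightarrow> 'b \<Rightarrow> bool" and S' :: "'c set" and le' :: "'c \<Rightarrow> 'c \<Rightarrow> bool"
    and f :: "'b \<Rightarrow> 'c" and g :: 'c
  assumes injf: "inj f" and fg: "\<And>b. f b \<noteq> g" and S'_eq: "S' = insert g (f ` S)"
    and lff[simp]: "\<And>a b. le' (f a) (f b) = le a b"
    and lzg[simp]: "\<And>z. le' z g = (z \<in> S')"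
    and lgf[simp]: "\<And>b. le' g (f b) = False"
    and inv0: "Inv0 S le" and ne: "S \<noteq> {}"
begin

lemma fS[simp]: "f a \<in> S' \<longleftrightarrow> a \<in> S" and gS[simp]: "g \<in> S'"
  and fg1[simp]: "f b \<noteq> g" and fg2[simp]: "g \<noteq> f b" and feq[simp]: "f a = f b \<longleftrightarrow> a = b"
  using injf fg unfolding S'_eq by (auto simp: inj_eq inj_image_mem_iff)

lemma Ball_S': "(\<forall>z\<in>S'. P z) = (P g \<and> (\<forall>a\<in>S. P (f a)))" unfolding S'_eq by simp
lemma Bex_S': "(\<exists>z\<in>S'. P z) = (P g \<or> (\<exists>a\<in>S. P (f a)))" unfolding S'_eq by simp
lemma Collect_S': "{z\<in>S'. P z} = (if P g then {g} else {}) \<union> f ` {a\<in>S. P (f a)}" unfolding S'_eq by auto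

lemma plt_simps[simp]: "plt le' (f a) (f b) = plt le a b" "plt le' (f a) g = (a \<in> S)"
  "plt le' g (f b) = False" "plt le' g g = False"
  unfolding plt_def by auto

lemma pcomp_simps[simp]: "pcomp le' (f a) (f b) = pcomp le a b" "pcomp le' (f a) g = (a \<in> S)"
  "pcomp le' g (f b) = (b \<in> S)" "pcomp le' g g = True"
  unfolding pcomp_def by auto

lemma fin: "finite S" and po: "po S le" using inv0 Inv0D by auto

lemma basic_f[simp]: "basic S' le' (f a) = basic S le a"
  by (cases "a \<in> S") (simp_all add: basic_def S'_eq inj_image_mem_iff[OF injf])

lemma g_not_basic: "\<not> basic S' le' g"
proof (cases "ischain S le")
  case True
  obtain m where mS: "m \<in> S" and mx: "\<forall>b\<in>S. le b m"
    using chain_max[OF fin ne po True] by blast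
  have "\<forall>w\<in>S'. w \<noteq> f m \<and> w \<noteq> g \<longrightarrow> ((le' w (f m) \<longleftrightarrow> le' w g) \<and> (le' (f m) w \<longleftrightarrow> le' g w))"
    using mx poD(2)[OF po] mS by (auto simp: S'_eq)
  moreover have "plt le' (f m) g" using mS by simp
  ultimately show ?thesis unfolding basic_def using mS
    by (metis fS)
next
  case False
  then obtain u v where "u \<in> S" "v \<in> S" "\<not> pcomp le u v" unfolding ischain_def by blast
  then show ?thesis unfolding basic_def by (metis fS pcomp_simps(1) plt_simps(2))
qed


lemma allb_eq: "allb S' le' = f ` allb S le"
  using g_not_basic unfolding allb_def by (auto simp: Collect_S' Ball_S' Bex_S')

lemma assoc_f: "assoc_basic S' le' (f a) = f ` assoc_basic S le a"
  using g_not_basic unfolding assoc_basic_def by (auto simp: Collect_S' Ball_S' Bex_S')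

lemma assoc_g: "assoc_basic S' le' g = allb S' le'"
  unfolding assoc_basic_def allb_def pcomp_def by auto

lemma lower_f[simp]: "lower S' le' (f a) = lower S le a"
  using g_not_basic unfolding lower_def by (auto simp: Collect_S' Ball_S' Bex_S')

lemma upper_f[simp]: "upper S' le' (f a) = upper S le a"
  using g_not_basic unfolding upper_def by (auto simp: Collect_S' Ball_S' Bex_S')

lemma univ_f: "a \<in> S \<Longrightarrow> univ S' le' (f a) = univ S le a"
  unfolding univ_def by (auto simp: Collect_S' Ball_S' Bex_S')

lemma lower_g: "\<not> lower S' le' g"
  unfolding lower_def by (auto simp: Collect_S' Ball_S' Bex_S')

lemma upper_g: "upper S' le' g"
proof -
  obtain b where "b \<in> allb S le" using Inv0D(3)[OF inv0 ne] by blast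
  then show ?thesis unfolding upper_def using g_not_basic basic_f
    by (auto simp: allb_def S'_eq)
qed

lemma S'_cases: "z \<in> S' \<Longrightarrow> (z = g \<Longrightarrow> P) \<Longrightarrow> (\<And>a. a \<in> S \<Longrightarrow> z = f a \<Longrightarrow> P) \<Longrightarrow> P"
  unfolding S'_eq by auto

lemma t4: "(\<forall>a\<in>S'. \<forall>b\<in>S'. le' a b \<and> le' b a \<longrightarrow> a = b) = (\<forall>a\<in>S. \<forall>b\<in>S. le a b \<and> le b a \<longrightarrow> a = b)" unfolding S'_eq by simp
lemma t5: "(\<forall>a\<in>S'. \<forall>b\<in>S'. \<forall>c\<in>S'. le' a b \<and> le' b c \<longrightarrow> le' a c) = (\<forall>a\<in>S. \<forall>b\<in>S. \<forall>c\<in>S. le a b \<and> le b c \<longrightarrow> le a c)" unfolding S'_eq by simp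
lemma t3: "(\<forall>a\<in>S'. le' a a) = (\<forall>a\<in>S. le a a)" unfolding S'_eq by simp
lemma po': "po S' le'"
  using po unfolding po_def t3 t4 t5 .



lemma Pl: "a \<in> S \<Longrightarrow> {b\<in>S'. plt le' (f a) b \<and> \<not> (\<exists>c\<in>S'. plt le' c b \<and> \<not> pcomp le' c (f a))}
   = f ` {b\<in>S. plt le a b \<and> \<not> (\<exists>c\<in>S. plt le c b \<and> \<not> pcomp le c a)} \<union> (if univ S le a then {g} else {})"
  by (auto simp: Collect_S' Bex_S' univ_def pcomp_def)

lemma Pu: "a \<in> S \<Longrightarrow> {b\<in>S'. plt le' b (f a) \<and> \<not> (\<exists>c\<in>S'. plt le' b c \<and> \<not> pcomp le' c (f a))}
   - {l\<in>S'. lower S' le' l \<and> assoc_basic S' le' l = assoc_basic S' le' (f a)}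
   = f ` ({b\<in>S. plt le b a \<and> \<not> (\<exists>c\<in>S. plt le b c \<and> \<not> pcomp le c a)}
          - {l\<in>S. lower S le l \<and> assoc_basic S le l = assoc_basic S le a})"
  using lower_g by (auto simp: Collect_S' Bex_S' assoc_f inj_image_eq_iff[OF injf])

lemma Pset_f: assumes that: "a \<in> S" shows "Pset S' le' (f a) = f ` Pset S le a \<union> (if lower S le a \<and> univ S le a then {g} else {})"
proof (cases "basic S le a")
  case True
  then have "\<not> lower S le a" unfolding lower_def by auto
  then show ?thesis using True that basic_f unfolding Pset_def by simp
next
  case nb: False
  show ?thesis
  proof (cases "lower S le a")
    case lo: True
    have "Pset S' le' (f a) = {b\<in>S'. plt le' (f a) b \<and> \<not> (\<exists>c\<in>S'. plt le' c b \<and> \<not> pcomp le' c (f a))}"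
      unfolding Pset_def using nb lo that by (simp add: basic_f lower_f)
    moreover have "Pset S le a = {b\<in>S. plt le a b \<and> \<not> (\<exists>c\<in>S. plt le c b \<and> \<not> pcomp le c a)}"
      unfolding Pset_def using nb lo by simp
    ultimately show ?thesis using Pl[OF that] lo by simp
  next
    case nlo: False
    show ?thesis
    proof (cases "upper S le a")
      case up: True
      have "Pset S' le' (f a) = {b\<in>S'. plt le' b (f a) \<and> \<not> (\<exists>c\<in>S'. plt le' b c \<and> \<not> pcomp le' c (f a))}
         - {l\<in>S'. lower S' le' l \<and> assoc_basic S' le' l = assoc_basic S' le' (f a)}"
        unfolding Pset_def using nb nlo up that by (simp add: basic_f lower_f upper_f)
      moreover have "Pset S le a = {b\<in>S. plt le b a \<and> \<not> (\<exists>c\<in>S. plt le b c \<and> \<not> pcomp le c a)}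
          - {l\<in>S. lower S le l \<and> assoc_basic S le l = assoc_basic S le a}"
        unfolding Pset_def using nb nlo up by simp
      ultimately show ?thesis using Pu[OF that] nlo by simp
    next
      case nup: False
      then show ?thesis unfolding Pset_def using nb nlo that by (simp add: basic_f lower_f upper_f)
    qed
  qed
qed

lemma UL_alt: "{l\<in>S. lower S le l \<and> assoc_basic S le l = allb S le} = UL S le"
proof -
  have "l \<in> S \<Longrightarrow> (lower S le l \<and> assoc_basic S le l = allb S le) = (lower S le l \<and> univ S le l)" for l
    using Inv0D(4)[OF inv0, of l] univ_assoc[of S le l] by blast
  then show ?thesis unfolding UL_def by blast
qed

lemma Pset_g: "Pset S' le' g = f ` (S - UL S le)"
proof -
  have 1: "{b\<in>S'. plt le' b g \<and> \<not> (\<exists>c\<in>S'. plt le' b c \<and> \<not> pcomp le' c g)} = f ` S"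
    by (simp add: Collect_S' Bex_S')
  have 2: "{l\<in>S'. lower S' le' l \<and> assoc_basic S' le' l = assoc_basic S' le' g} = f ` UL S le"
    unfolding assoc_g allb_eq UL_alt[symmetric] using lower_g
    by (simp add: Collect_S' assoc_f inj_image_eq_iff[OF injf])
  have "Pset S' le' g = {b\<in>S'. plt le' b g \<and> \<not> (\<exists>c\<in>S'. plt le' b c \<and> \<not> pcomp le' c g)} - 
     {l\<in>S'. lower S' le' l \<and> assoc_basic S' le' l = assoc_basic S' le' g}"
    unfolding Pset_def using g_not_basic lower_g upper_g by simp
  then show ?thesis unfolding 1 2 by (simp add: image_set_diff[OF injf])
qed


lemma mac_f: assumes AS: "A \<subseteq> S" shows "max_antichain S' le' (f ` A) = max_antichain S le A"
proof -
  have 1: "f ` A \<subseteq> S'" using AS unfolding S'_eq by auto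
  have 2: "(\<forall>u\<in>f ` A. \<forall>v\<in>f ` A. u \<noteq> v \<longrightarrow> \<not> pcomp le' u v) = (\<forall>u\<in>A. \<forall>v\<in>A. u \<noteq> v \<longrightarrow> \<not> pcomp le u v)"
    by simp
  have 3: "(\<forall>z\<in>S' - f ` A. \<exists>a\<in>f ` A. pcomp le' z a) = (\<forall>z\<in>S - A. \<exists>a\<in>A. pcomp le z a)"
  proof -
    have "(\<forall>z\<in>S' - f ` A. \<exists>a\<in>f ` A. pcomp le' z a) = (\<forall>z\<in>S'. z \<notin> f ` A \<longrightarrow> (\<exists>a\<in>A. pcomp le' z (f a)))"
      by blast
    also have "\<dots> = ((\<exists>a\<in>A. a \<in> S) \<and> (\<forall>z\<in>S. z \<notin> A \<longrightarrow> (\<exists>a\<in>A. pcomp le z a)))"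
      unfolding Ball_S' using fg by (simp add: inj_image_mem_iff[OF injf] image_iff)
    also have "\<dots> = (\<forall>z\<in>S - A. \<exists>a\<in>A. pcomp le z a)"
    proof
      assume "\<forall>z\<in>S - A. \<exists>a\<in>A. pcomp le z a"
      moreover obtain z where "z \<in> S" using ne by blast
      ultimately have "\<exists>a\<in>A. a \<in> S" using AS by blast
      then show "(\<exists>a\<in>A. a \<in> S) \<and> (\<forall>z\<in>S. z \<notin> A \<longrightarrow> (\<exists>a\<in>A. pcomp le z a))"
        using \<open>\<forall>z\<in>S - A. \<exists>a\<in>A. pcomp le z a\<close> by blast
    qed blast
    finally show ?thesis .
  qed
  show ?thesis unfolding max_antichain_def using 1 2 3 AS by blast
qed

lemma MA_top: "MA S' le' = insert {g} ((\<lambda>A. f ` A) ` MA S le)"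
proof (intro equalityI subsetI)
  fix A' assume A': "A' \<in> MA S' le'"
  then have sub: "A' \<subseteq> S'" and ac: "\<forall>u\<in>A'. \<forall>v\<in>A'. u \<noteq> v \<longrightarrow> \<not> pcomp le' u v"
    unfolding MA_def max_antichain_def by auto
  show "A' \<in> insert {g} ((\<lambda>A. f ` A) ` MA S le)"
  proof (cases "g \<in> A'")
    case True
    have "A' = {g}"
    proof
      show "A' \<subseteq> {g}"
      proof
        fix b assume b: "b \<in> A'"
        have "pcomp le' b g" using sub b unfolding pcomp_def by auto
        then show "b \<in> {g}" using ac b True by blast
      qed
    qed (use True in auto)
    then show ?thesis by simp
  next
    case False
    define A where "A = {a\<in>S. f a \<in> A'}"
    have AS: "A \<subseteq> S" unfolding A_def by auto
    have eq: "A' = f ` A" using sub False unfolding A_def S'_eq by auto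
    have "A \<in> MA S le" using A' mac_f[OF AS] unfolding eq MA_def by simp
    then show ?thesis using eq by blast
  qed
next
  fix A' assume "A' \<in> insert {g} ((\<lambda>A. f ` A) ` MA S le)"
  then show "A' \<in> MA S' le'"
  proof
    assume "A' = {g}"
    then show ?thesis unfolding MA_def max_antichain_def pcomp_def by (auto simp: S'_eq)
  next
    assume "A' \<in> (\<lambda>A. f ` A) ` MA S le"
    then obtain A where "A \<in> MA S le" "A' = f ` A" by auto
    then show ?thesis using mac_f[of A] MA_Pow unfolding MA_def by auto
  qed
qed

lemma wt_f: assumes aS: "a \<in> S"
  shows "card (Pset S' le' (f a)) = card (Pset S le a) + (if a \<in> UL S le then 1 else 0)"
proof -
  have fin1: "finite (f ` Pset S le a)" using finite_Pset[OF fin] by simp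
  have "g \<notin> f ` Pset S le a" by auto
  then show ?thesis using Pset_f[OF aS] fin1 aS card_image[OF inj_on_subset[OF injf]]
    unfolding UL_def by (auto simp: card_insert_if)
qed

lemma Fw_f: assumes A: "A \<in> MA S le" and dis: "A \<inter> UL S le = {}"
  shows "Fw S' le' x y (f ` A) = Fw S le x y A"
proof -
  have AS: "A \<subseteq> S" using A MA_Pow by blast
  have "{b\<in>f ` A. basic S' le' b} = f ` {a\<in>A. basic S le a}" by auto
  then have c: "card {b\<in>f ` A. basic S' le' b} = card {a\<in>A. basic S le a}"
    by (simp add: card_image[OF inj_on_subset[OF injf]])
  have "(\<Sum>b\<in>f ` A. card (Pset S' le' b)) = (\<Sum>a\<in>A. card (Pset S' le' (f a)))"
    using sum.reindex[OF inj_on_subset[OF injf subset_UNIV], of "\<lambda>b. card (Pset S' le' b)" A] by (simp add: comp_def)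
  also have "\<dots> = (\<Sum>a\<in>A. card (Pset S le a))"
  proof (rule sum.cong)
    fix a assume "a \<in> A"
    then have "a \<in> S" "a \<notin> UL S le" using AS dis by auto
    then show "card (Pset S' le' (f a)) = card (Pset S le a)" using wt_f by simp
  qed simp
  finally show ?thesis unfolding Fw_def c by simp
qed

lemma Fw_f1: assumes a: "a \<in> UL S le"
  shows "Fw S' le' x y (f ` {a}) - Fw S le x y {a} = (y - 1) * y ^ card (Pset S le a)"
proof -
  have aS: "a \<in> S" and lo: "lower S le a" using a unfolding UL_def by auto
  have nb: "\<not> basic S le a" using lo unfolding lower_def by auto
  have e1: "{aa. aa = f a \<and> basic S' le' aa} = {}" using nb by auto
  have e2: "{aa. aa = a \<and> basic S le aa} = {}" using nb by auto
  show ?thesis unfolding Fw_def using wt_f[OF aS] a by (simp add: algebra_simps e1 e2)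
qed


lemma UL_top: "UL S' le' = f ` UL S le"
proof -
  have "UL S' le' = {z\<in>S'. lower S' le' z \<and> univ S' le' z}" unfolding UL_def ..
  also have "\<dots> = f ` {a\<in>S. lower S le a \<and> univ S' le' (f a)}"
    unfolding Collect_S' using lower_g by simp
  also have "{a\<in>S. lower S le a \<and> univ S' le' (f a)} = UL S le"
    unfolding UL_def using univ_f by blast
  finally show ?thesis .
qed

lemma top_main:
  fixes x y :: "'a::comm_ring_1"
  assumes invs: "InvS S le y"
  shows "Inv0 S' le' \<and> InvS S' le' y \<and> Lpoly S' le' x y = Lpoly S le x y + y ^ card S"
proof -
  have finS': "finite S'" using fin unfolding S'_eq by simp
  have cS': "card S' = Suc (card S)" using fin unfolding S'_eq by (simp add: card_image[OF inj_on_subset[OF injf subset_UNIV]] image_iff)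
  have ULS: "UL S le \<subseteq> S" unfolding UL_def by auto
  have finUL: "finite (UL S le)" using finite_subset[OF ULS fin] .
  have cUL: "card (UL S le) \<le> card S" using card_mono[OF fin ULS] .
  have inv0': "Inv0 S' le'"
    unfolding Inv0_def
  proof (intro conjI ballI impI)
    show "finite S'" by (rule finS')
    show "po S' le'" by (rule po')
    show "allb S' le' \<noteq> {}" using Inv0D(3)[OF inv0 ne] allb_eq by simp
  next
    fix l assume lS: "l \<in> S'" and h: "lower S' le' l \<and> assoc_basic S' le' l = allb S' le'"
    show "univ S' le' l" using lS
    proof (rule S'_cases)
      assume "l = g" then show ?thesis using h lower_g by simp
    next
      fix a assume aS: "a \<in> S" and la: "l = f a"
      have "lower S le a" using h la by simp
      moreover have "assoc_basic S le a = allb S le"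
        using h la assoc_f allb_eq inj_image_eq_iff[OF injf] by metis
      ultimately have "univ S le a" using Inv0D(4)[OF inv0 aS] by blast
      then show ?thesis using univ_f[OF aS] la by simp
    qed
  qed
  let ?n = "card S" and ?u = "card (UL S le)"
  have sumUL: "(\<Sum>a\<in>UL S le. y ^ card (Pset S le a)) = (\<Sum>k\<in>{?n - ?u..<?n}. y ^ k)"
    using invs unfolding InvS_def .
  have cULt: "card (UL S' le') = ?u" unfolding UL_top by (simp add: card_image[OF inj_on_subset[OF injf subset_UNIV]])
  have "(\<Sum>b\<in>UL S' le'. y ^ card (Pset S' le' b)) = (\<Sum>a\<in>UL S le. y ^ card (Pset S' le' (f a)))"
    unfolding UL_top using sum.reindex[OF inj_on_subset[OF injf subset_UNIV], of "\<lambda>b. y ^ card (Pset S' le' b)" "UL S le"]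
    by (simp add: comp_def)
  also have "\<dots> = (\<Sum>a\<in>UL S le. y * y ^ card (Pset S le a))"
  proof (rule sum.cong)
    fix a assume a: "a \<in> UL S le"
    then have "a \<in> S" using ULS by auto
    then show "y ^ card (Pset S' le' (f a)) = y * y ^ card (Pset S le a)" using wt_f a by simp
  qed simp
  also have "\<dots> = y * (\<Sum>k\<in>{?n - ?u..<?n}. y ^ k)" by (simp add: sum_distrib_left[symmetric] sumUL)
  also have "\<dots> = (\<Sum>k\<in>{Suc (?n - ?u)..<Suc ?n}. y ^ k)" by (rule sum_shift_pow)
  also have "Suc (?n - ?u) = card S' - card (UL S' le')" using cS' cULt cUL by simp
  finally have invs': "InvS S' le' y" unfolding InvS_def cS' by simp
  have finMA: "finite (MA S le)" using finite_MA[OF fin] .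
  have injMA: "inj_on (\<lambda>A. f ` A) (MA S le)"
    using inj_on_subset[OF inj_on_image_Pow[OF inj_on_subset[OF injf subset_UNIV]] MA_Pow] .
  have gnot: "{g} \<notin> (\<lambda>A. f ` A) ` MA S le"
  proof
    assume "{g} \<in> (\<lambda>A. f ` A) ` MA S le"
    then obtain A where "{g} = f ` A" by blast
    then have "g \<in> f ` A" by blast
    then show False by auto
  qed
  have L1: "Lpoly S' le' x y = Fw S' le' x y {g} + (\<Sum>A\<in>MA S le. Fw S' le' x y (f ` A))"
    unfolding Lpoly_MA MA_top using finMA gnot
    by (simp add: sum.reindex[OF injMA] comp_def)
  have eg: "{aa. aa = g \<and> basic S' le' aa} = {}" using g_not_basic by auto
  have cPg: "card (Pset S' le' g) = ?n - ?u"
    unfolding Pset_g using card_image[OF inj_on_subset[OF injf subset_UNIV]] card_Diff_subset[OF finUL ULS] by simp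
  have Fg: "Fw S' le' x y {g} = y ^ (?n - ?u)" unfolding Fw_def using cPg by (simp add: eg)
  define D where "D A = Fw S' le' x y (f ` A) - Fw S le x y A" for A
  have sub1: "(\<lambda>a. {a}) ` UL S le \<subseteq> MA S le"
  proof
    fix A assume "A \<in> (\<lambda>a. {a}) ` UL S le"
    then obtain a where "a \<in> UL S le" "A = {a}" by blast
    then show "A \<in> MA S le" using univ_single_MA[of a S le] unfolding UL_def by simp
  qed
  have D0: "\<forall>A\<in>MA S le - (\<lambda>a. {a}) ` UL S le. D A = 0"
  proof
    fix A assume A: "A \<in> MA S le - (\<lambda>a. {a}) ` UL S le"
    have "A \<inter> UL S le = {}"
    proof (rule ccontr)
      assume "A \<inter> UL S le \<noteq> {}"
      then obtain a where "a \<in> A" "a \<in> UL S le" by blast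
      then have "A = {a}" using univ_in_MA[of A S le a] A unfolding UL_def by simp
      then show False using A \<open>a \<in> UL S le\<close> by blast
    qed
    moreover have "A \<in> MA S le" using A by blast
    ultimately show "D A = 0" unfolding D_def using Fw_f by simp
  qed
  have "(\<Sum>A\<in>MA S le. D A) = (\<Sum>A\<in>(\<lambda>a. {a}) ` UL S le. D A)"
    by (rule sum.mono_neutral_right[OF finMA sub1 D0])
  also have "\<dots> = (\<Sum>a\<in>UL S le. D {a})" by (subst sum.reindex) (auto simp: inj_on_def)
  also have "\<dots> = (\<Sum>a\<in>UL S le. (y - 1) * y ^ card (Pset S le a))"
  proof (rule sum.cong)
    fix a assume "a \<in> UL S le"
    then show "D {a} = (y - 1) * y ^ card (Pset S le a)" unfolding D_def by (rule Fw_f1)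
  qed simp
  also have "\<dots> = (y - 1) * (\<Sum>k\<in>{?n - ?u..<?n}. y ^ k)" by (simp add: sum_distrib_left[symmetric] sumUL)
  also have "\<dots> = y ^ ?n - y ^ (?n - ?u)" by (rule sum_geom_telescope) simp
  finally have SD: "(\<Sum>A\<in>MA S le. D A) = y ^ ?n - y ^ (?n - ?u)" .
  have "(\<Sum>A\<in>MA S le. Fw S' le' x y (f ` A)) = (\<Sum>A\<in>MA S le. Fw S le x y A) + (\<Sum>A\<in>MA S le. D A)"
    unfolding D_def by (simp add: sum.distrib[symmetric])
  then have E: "(\<Sum>A\<in>MA S le. Fw S' le' x y (f ` A)) = Lpoly S le x y + (y ^ ?n - y ^ (?n - ?u))"
    unfolding SD Lpoly_MA .
  have "Lpoly S' le' x y = Lpoly S le x y + y ^ card S"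
    unfolding L1 Fg E by simp
  then show ?thesis using inv0' invs' by simp
qed

end

locale botbase =
  fixes S :: "'b set" and le :: "'b \<Rightarrow> 'b \<Rightarrow> bool" and S' :: "'c set" and le' :: "'c \<Rightarrow> 'c \<Rightarrow> bool"
    and f :: "'b \<Rightarrow> 'c" and g :: 'c
  assumes injf: "inj f" and fg: "\<And>b. f b \<noteq> g" and S'_eq: "S' = insert g (f ` S)"
    and lff[simp]: "\<And>a b. le' (f a) (f b) = le a b"
    and lgz[simp]: "\<And>z. le' g z = (z \<in> S')"
    and lfg[simp]: "\<And>b. le' (f b) g = False"
    and finb: "finite S" and pob: "po S le"
begin

lemma fS[simp]: "f a \<in> S' \<longleftrightarrow> a \<in> S" and gS[simp]: "g \<in> S'"
  and fg1[simp]: "f b \<noteq> g" and fg2[simp]: "g \<noteq> f b" and feq[simp]: "f a = f b \<longleftrightarrow> a = b"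
  using injf fg unfolding S'_eq by (auto simp: inj_eq inj_image_mem_iff)

lemma Ball_S': "(\<forall>z\<in>S'. P z) = (P g \<and> (\<forall>a\<in>S. P (f a)))" unfolding S'_eq by simp
lemma Bex_S': "(\<exists>z\<in>S'. P z) = (P g \<or> (\<exists>a\<in>S. P (f a)))" unfolding S'_eq by simp
lemma Collect_S': "{z\<in>S'. P z} = (if P g then {g} else {}) \<union> f ` {a\<in>S. P (f a)}" unfolding S'_eq by auto
lemma S'_cases: "z \<in> S' \<Longrightarrow> (z = g \<Longrightarrow> P) \<Longrightarrow> (\<And>a. a \<in> S \<Longrightarrow> z = f a \<Longrightarrow> P) \<Longrightarrow> P"
  unfolding S'_eq by auto

lemma plt_simps[simp]: "plt le' (f a) (f b) = plt le a b" "plt le' g (f a) = (a \<in> S)"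
  "plt le' (f b) g = False" "plt le' g g = False"
  unfolding plt_def by auto

lemma pcomp_simps[simp]: "pcomp le' (f a) (f b) = pcomp le a b" "pcomp le' (f a) g = (a \<in> S)"
  "pcomp le' g (f b) = (b \<in> S)" "pcomp le' g g = True"
  unfolding pcomp_def by auto

lemma t4: "(\<forall>a\<in>S'. \<forall>b\<in>S'. le' a b \<and> le' b a \<longrightarrow> a = b) = (\<forall>a\<in>S. \<forall>b\<in>S. le a b \<and> le b a \<longrightarrow> a = b)" unfolding S'_eq by simp
lemma t5: "(\<forall>a\<in>S'. \<forall>b\<in>S'. \<forall>c\<in>S'. le' a b \<and> le' b c \<longrightarrow> le' a c) = (\<forall>a\<in>S. \<forall>b\<in>S. \<forall>c\<in>S. le a b \<and> le b c \<longrightarrow> le a c)" unfolding S'_eq by simp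
lemma t3: "(\<forall>a\<in>S'. le' a a) = (\<forall>a\<in>S. le a a)" unfolding S'_eq by simp
lemma po': "po S' le'"
  using pob unfolding po_def t3 t4 t5 .

lemma fin': "finite S'" using finb unfolding S'_eq by simp

lemma chain': "ischain S le \<Longrightarrow> ischain S' le'"
  unfolding ischain_def Ball_S' by simp

lemma card': "card S' = Suc (card S)"
  using finb unfolding S'_eq by (simp add: card_image[OF inj_on_subset[OF injf subset_UNIV]] image_iff)

end

locale botext = botbase +
  assumes inv0: "Inv0 S le" and nch: "\<not> ischain S le"
begin

lemma fin: "finite S" and po: "po S le" using inv0 Inv0D by auto

lemma ne: "S \<noteq> {}" using nch unfolding ischain_def by auto

lemma basic_raw: "basic S' le' (f a) = (basic S le a \<and> \<not> (\<forall>w\<in>S. w \<noteq> a \<longrightarrow> \<not> le w a \<and> le a w))"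
  by (cases "a \<in> S") (simp_all add: basic_def Ball_S' Bex_S', blast)

lemma basic_notQ: assumes b: "basic S le a" shows "\<not> (\<forall>w\<in>S. w \<noteq> a \<longrightarrow> \<not> le w a \<and> le a w)"
proof
  assume Q: "\<forall>w\<in>S. w \<noteq> a \<longrightarrow> \<not> le w a \<and> le a w"
  obtain u v where u: "u \<in> S" and v: "v \<in> S" and uv: "\<not> pcomp le u v" using nch unfolding ischain_def by blast
  have aS: "a \<in> S" using b unfolding basic_def by auto
  have rf: "le a a" using poD(1)[OF po aS] .
  have ua: "u \<noteq> a"
  proof
    assume "u = a"
    moreover have "v \<noteq> a" using uv rf \<open>u = a\<close> unfolding pcomp_def by auto
    ultimately show False using Q v uv unfolding pcomp_def by auto
  qed
  have va: "v \<noteq> a"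
  proof
    assume "v = a"
    then show False using Q u uv ua unfolding pcomp_def by auto
  qed
  have "plt le a u" "plt le a v" using Q u v ua va unfolding plt_def by auto
  then show False using b u v uv unfolding basic_def by blast
qed

lemma basic_f[simp]: "basic S' le' (f a) = basic S le a"
  using basic_raw basic_notQ by blast

lemma g_not_basic: "\<not> basic S' le' g"
proof -
  obtain u v where "u \<in> S" "v \<in> S" "\<not> pcomp le u v" using nch unfolding ischain_def by blast
  then show ?thesis unfolding basic_def by (metis fS pcomp_simps(1) plt_simps(2))
qed

lemma allb_eq: "allb S' le' = f ` allb S le"
  using g_not_basic unfolding allb_def by (auto simp: Collect_S' Ball_S' Bex_S')

lemma assoc_f: "assoc_basic S' le' (f a) = f ` assoc_basic S le a"
  using g_not_basic unfolding assoc_basic_def by (auto simp: Collect_S' Ball_S' Bex_S')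

lemma assoc_g: "assoc_basic S' le' g = allb S' le'"
  unfolding assoc_basic_def allb_def pcomp_def by auto

lemma lower_f[simp]: "lower S' le' (f a) = lower S le a"
  using g_not_basic unfolding lower_def by (auto simp: Collect_S' Ball_S' Bex_S')

lemma upper_f[simp]: "upper S' le' (f a) = upper S le a"
  using g_not_basic unfolding upper_def by (auto simp: Collect_S' Ball_S' Bex_S')

lemma univ_f: "a \<in> S \<Longrightarrow> univ S' le' (f a) = univ S le a"
  unfolding univ_def by (auto simp: Collect_S' Ball_S' Bex_S')

lemma univ_g: "univ S' le' g"
  unfolding univ_def by (auto simp: Ball_S')

lemma upper_g: "\<not> upper S' le' g"
  unfolding upper_def by (auto simp: Ball_S' Bex_S')

lemma lower_g: "lower S' le' g"
proof -
  obtain b where "b \<in> allb S le" using Inv0D(3)[OF inv0 ne] by blast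
  then show ?thesis unfolding lower_def using g_not_basic
    by (auto simp: allb_def Bex_S')
qed


lemma Pl: "a \<in> S \<Longrightarrow> {b\<in>S'. plt le' (f a) b \<and> \<not> (\<exists>c\<in>S'. plt le' c b \<and> \<not> pcomp le' c (f a))}
   = f ` {b\<in>S. plt le a b \<and> \<not> (\<exists>c\<in>S. plt le c b \<and> \<not> pcomp le c a)}"
  by (simp add: Collect_S' Bex_S')

lemma Pu: assumes aS: "a \<in> S" shows "{b\<in>S'. plt le' b (f a) \<and> \<not> (\<exists>c\<in>S'. plt le' b c \<and> \<not> pcomp le' c (f a))}
   - {l\<in>S'. lower S' le' l \<and> assoc_basic S' le' l = assoc_basic S' le' (f a)}
   = f ` ({b\<in>S. plt le b a \<and> \<not> (\<exists>c\<in>S. plt le b c \<and> \<not> pcomp le c a)}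
          - {l\<in>S. lower S le l \<and> assoc_basic S le l = assoc_basic S le a})"
proof -
  have 1: "{b\<in>S'. plt le' b (f a) \<and> \<not> (\<exists>c\<in>S'. plt le' b c \<and> \<not> pcomp le' c (f a))}
     = (if univ S le a then {g} else {}) \<union> f ` {b\<in>S. plt le b a \<and> \<not> (\<exists>c\<in>S. plt le b c \<and> \<not> pcomp le c a)}"
    using aS by (simp add: Collect_S' Bex_S' univ_def pcomp_def) blast
  have 2: "{l\<in>S'. lower S' le' l \<and> assoc_basic S' le' l = assoc_basic S' le' (f a)}
     = (if allb S le = assoc_basic S le a then {g} else {}) \<union> f ` {l\<in>S. lower S le l \<and> assoc_basic S le l = assoc_basic S le a}"
    using lower_g by (simp add: Collect_S' assoc_g allb_eq assoc_f inj_image_eq_iff[OF injf])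
  have 3: "univ S le a \<Longrightarrow> allb S le = assoc_basic S le a" using univ_assoc by metis
  show ?thesis unfolding 1 2 using 3 by (auto simp: image_set_diff[OF injf])
qed

lemma Pset_f: assumes that: "a \<in> S" shows "Pset S' le' (f a) = f ` Pset S le a"
proof (cases "basic S le a")
  case True
  then show ?thesis using that unfolding Pset_def by simp
next
  case nb: False
  show ?thesis
  proof (cases "lower S le a")
    case lo: True
    have "Pset S' le' (f a) = {b\<in>S'. plt le' (f a) b \<and> \<not> (\<exists>c\<in>S'. plt le' c b \<and> \<not> pcomp le' c (f a))}"
      unfolding Pset_def using nb lo that by simp
    moreover have "Pset S le a = {b\<in>S. plt le a b \<and> \<not> (\<exists>c\<in>S. plt le c b \<and> \<not> pcomp le c a)}"
      unfolding Pset_def using nb lo by simp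
    ultimately show ?thesis using Pl[OF that] by simp
  next
    case nlo: False
    show ?thesis
    proof (cases "upper S le a")
      case up: True
      have "Pset S' le' (f a) = {b\<in>S'. plt le' b (f a) \<and> \<not> (\<exists>c\<in>S'. plt le' b c \<and> \<not> pcomp le' c (f a))}
         - {l\<in>S'. lower S' le' l \<and> assoc_basic S' le' l = assoc_basic S' le' (f a)}"
        unfolding Pset_def using nb nlo up that by simp
      moreover have "Pset S le a = {b\<in>S. plt le b a \<and> \<not> (\<exists>c\<in>S. plt le b c \<and> \<not> pcomp le c a)}
          - {l\<in>S. lower S le l \<and> assoc_basic S le l = assoc_basic S le a}"
        unfolding Pset_def using nb nlo up by simp
      ultimately show ?thesis using Pu[OF that] by simp
    next
      case nup: False
      then show ?thesis unfolding Pset_def using nb nlo that by simp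
    qed
  qed
qed

lemma Pset_g: "Pset S' le' g = f ` S"
proof -
  have "Pset S' le' g = {b\<in>S'. plt le' g b \<and> \<not> (\<exists>c\<in>S'. plt le' c b \<and> \<not> pcomp le' c g)}"
    unfolding Pset_def using g_not_basic lower_g by simp
  also have "\<dots> = f ` S" by (simp add: Collect_S' Bex_S')
  finally show ?thesis .
qed

lemma mac_f: assumes AS: "A \<subseteq> S" shows "max_antichain S' le' (f ` A) = max_antichain S le A"
proof -
  have 1: "f ` A \<subseteq> S'" using AS unfolding S'_eq by auto
  have 2: "(\<forall>u\<in>f ` A. \<forall>v\<in>f ` A. u \<noteq> v \<longrightarrow> \<not> pcomp le' u v) = (\<forall>u\<in>A. \<forall>v\<in>A. u \<noteq> v \<longrightarrow> \<not> pcomp le u v)"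
    by simp
  have 3: "(\<forall>z\<in>S' - f ` A. \<exists>a\<in>f ` A. pcomp le' z a) = (\<forall>z\<in>S - A. \<exists>a\<in>A. pcomp le z a)"
  proof -
    have "(\<forall>z\<in>S' - f ` A. \<exists>a\<in>f ` A. pcomp le' z a) = (\<forall>z\<in>S'. z \<notin> f ` A \<longrightarrow> (\<exists>a\<in>A. pcomp le' z (f a)))"
      by blast
    also have "\<dots> = ((\<exists>a\<in>A. a \<in> S) \<and> (\<forall>z\<in>S. z \<notin> A \<longrightarrow> (\<exists>a\<in>A. pcomp le z a)))"
      unfolding Ball_S' using fg by (simp add: inj_image_mem_iff[OF injf] image_iff)
    also have "\<dots> = (\<forall>z\<in>S - A. \<exists>a\<in>A. pcomp le z a)"
    proof
      assume "\<forall>z\<in>S - A. \<exists>a\<in>A. pcomp le z a"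
      moreover obtain z where "z \<in> S" using ne by blast
      ultimately have "\<exists>a\<in>A. a \<in> S" using AS by blast
      then show "(\<exists>a\<in>A. a \<in> S) \<and> (\<forall>z\<in>S. z \<notin> A \<longrightarrow> (\<exists>a\<in>A. pcomp le z a))"
        using \<open>\<forall>z\<in>S - A. \<exists>a\<in>A. pcomp le z a\<close> by blast
    qed blast
    finally show ?thesis .
  qed
  show ?thesis unfolding max_antichain_def using 1 2 3 AS by blast
qed

lemma MA_bot: "MA S' le' = insert {g} ((\<lambda>A. f ` A) ` MA S le)"
proof (intro equalityI subsetI)
  fix A' assume A': "A' \<in> MA S' le'"
  then have sub: "A' \<subseteq> S'" and ac: "\<forall>u\<in>A'. \<forall>v\<in>A'. u \<noteq> v \<longrightarrow> \<not> pcomp le' u v"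
    unfolding MA_def max_antichain_def by auto
  show "A' \<in> insert {g} ((\<lambda>A. f ` A) ` MA S le)"
  proof (cases "g \<in> A'")
    case True
    have "A' = {g}"
    proof
      show "A' \<subseteq> {g}"
      proof
        fix b assume b: "b \<in> A'"
        have "pcomp le' b g" using sub b unfolding pcomp_def by auto
        then show "b \<in> {g}" using ac b True by blast
      qed
    qed (use True in auto)
    then show ?thesis by simp
  next
    case False
    define A where "A = {a\<in>S. f a \<in> A'}"
    have AS: "A \<subseteq> S" unfolding A_def by auto
    have eq: "A' = f ` A" using sub False unfolding A_def S'_eq by auto
    have "A \<in> MA S le" using A' mac_f[OF AS] unfolding eq MA_def by simp
    then show ?thesis using eq by blast
  qed
next
  fix A' assume "A' \<in> insert {g} ((\<lambda>A. f ` A) ` MA S le)"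
  then show "A' \<in> MA S' le'"
  proof
    assume "A' = {g}"
    then show ?thesis unfolding MA_def max_antichain_def pcomp_def by (auto simp: S'_eq)
  next
    assume "A' \<in> (\<lambda>A. f ` A) ` MA S le"
    then obtain A where "A \<in> MA S le" "A' = f ` A" by auto
    then show ?thesis using mac_f[of A] MA_Pow unfolding MA_def by auto
  qed
qed

lemma Fw_f: assumes A: "A \<in> MA S le"
  shows "Fw S' le' x y (f ` A) = Fw S le x y A"
proof -
  have AS: "A \<subseteq> S" using A MA_Pow by blast
  have "{b\<in>f ` A. basic S' le' b} = f ` {a\<in>A. basic S le a}" by auto
  then have c: "card {b\<in>f ` A. basic S' le' b} = card {a\<in>A. basic S le a}"
    by (simp add: card_image[OF inj_on_subset[OF injf]])
  have "(\<Sum>b\<in>f ` A. card (Pset S' le' b)) = (\<Sum>a\<in>A. card (Pset S' le' (f a)))"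
    using sum.reindex[OF inj_on_subset[OF injf subset_UNIV], of "\<lambda>b. card (Pset S' le' b)" A] by (simp add: comp_def)
  also have "\<dots> = (\<Sum>a\<in>A. card (Pset S le a))"
  proof (rule sum.cong)
    fix a assume "a \<in> A"
    then have "a \<in> S" using AS by auto
    then show "card (Pset S' le' (f a)) = card (Pset S le a)"
      using Pset_f card_image[OF inj_on_subset[OF injf subset_UNIV]] by simp
  qed simp
  finally show ?thesis unfolding Fw_def c by simp
qed

lemma UL_bot: "UL S' le' = insert g (f ` UL S le)"
proof -
  have "UL S' le' = {z\<in>S'. lower S' le' z \<and> univ S' le' z}" unfolding UL_def ..
  also have "\<dots> = insert g (f ` {a\<in>S. lower S le a \<and> univ S' le' (f a)})"
    unfolding Collect_S' using lower_g univ_g by simp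
  also have "{a\<in>S. lower S le a \<and> univ S' le' (f a)} = UL S le"
    unfolding UL_def using univ_f by blast
  finally show ?thesis .
qed

lemma bot_main:
  fixes x y :: "'d::comm_ring_1"
  assumes invs: "InvS S le y"
  shows "Inv0 S' le' \<and> InvS S' le' y \<and> Lpoly S' le' x y = Lpoly S le x y + y ^ card S"
proof -
  have ULS: "UL S le \<subseteq> S" unfolding UL_def by auto
  have finUL: "finite (UL S le)" using finite_subset[OF ULS fin] .
  have cUL: "card (UL S le) \<le> card S" using card_mono[OF fin ULS] .
  have inv0': "Inv0 S' le'"
    unfolding Inv0_def
  proof (intro conjI ballI impI)
    show "finite S'" by (rule fin')
    show "po S' le'" by (rule po')
    show "allb S' le' \<noteq> {}" using Inv0D(3)[OF inv0 ne] allb_eq by simp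
  next
    fix l assume lS: "l \<in> S'" and h: "lower S' le' l \<and> assoc_basic S' le' l = allb S' le'"
    show "univ S' le' l" using lS
    proof (rule S'_cases)
      assume "l = g" then show ?thesis using univ_g by simp
    next
      fix a assume aS: "a \<in> S" and la: "l = f a"
      have "lower S le a" using h la by simp
      moreover have "assoc_basic S le a = allb S le"
        using h la assoc_f allb_eq inj_image_eq_iff[OF injf] by metis
      ultimately have "univ S le a" using Inv0D(4)[OF inv0 aS] by blast
      then show ?thesis using univ_f[OF aS] la by simp
    qed
  qed
  let ?n = "card S" and ?u = "card (UL S le)"
  have sumUL: "(\<Sum>a\<in>UL S le. y ^ card (Pset S le a)) = (\<Sum>k\<in>{?n - ?u..<?n}. y ^ k)"
    using invs unfolding InvS_def .
  have gn: "g \<notin> f ` UL S le" by auto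
  have cPg: "card (Pset S' le' g) = ?n"
    unfolding Pset_g using card_image[OF inj_on_subset[OF injf subset_UNIV]] by simp
  have cULt: "card (UL S' le') = Suc ?u" unfolding UL_bot using gn finUL
    by (simp add: card_image[OF inj_on_subset[OF injf subset_UNIV]])
  have "(\<Sum>b\<in>UL S' le'. y ^ card (Pset S' le' b)) = y ^ ?n + (\<Sum>b\<in>f ` UL S le. y ^ card (Pset S' le' b))"
    unfolding UL_bot using gn finUL cPg by simp
  also have "(\<Sum>b\<in>f ` UL S le. y ^ card (Pset S' le' b)) = (\<Sum>a\<in>UL S le. y ^ card (Pset S' le' (f a)))"
    using sum.reindex[OF inj_on_subset[OF injf subset_UNIV], of "\<lambda>b. y ^ card (Pset S' le' b)" "UL S le"]
    by (simp add: comp_def)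
  also have "\<dots> = (\<Sum>a\<in>UL S le. y ^ card (Pset S le a))"
  proof (rule sum.cong)
    fix a assume a: "a \<in> UL S le"
    then have "a \<in> S" using ULS by auto
    then show "y ^ card (Pset S' le' (f a)) = y ^ card (Pset S le a)"
      using Pset_f card_image[OF inj_on_subset[OF injf subset_UNIV]] by simp
  qed simp
  also have "y ^ ?n + \<dots> = (\<Sum>k\<in>{?n - ?u..<Suc ?n}. y ^ k)"
    unfolding sumUL by (simp add: sum.atLeastLessThan_Suc)
  also have "?n - ?u = card S' - card (UL S' le')" using card' cULt by simp
  finally have invs': "InvS S' le' y" unfolding InvS_def card' by simp
  have finMA: "finite (MA S le)" using finite_MA[OF fin] .
  have injMA: "inj_on (\<lambda>A. f ` A) (MA S le)"
    using inj_on_subset[OF inj_on_image_Pow[OF inj_on_subset[OF injf subset_UNIV]] MA_Pow] .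
  have gnot: "{g} \<notin> (\<lambda>A. f ` A) ` MA S le"
  proof
    assume "{g} \<in> (\<lambda>A. f ` A) ` MA S le"
    then obtain A where "{g} = f ` A" by blast
    then have "g \<in> f ` A" by blast
    then show False by auto
  qed
  have L1: "Lpoly S' le' x y = Fw S' le' x y {g} + (\<Sum>A\<in>MA S le. Fw S' le' x y (f ` A))"
    unfolding Lpoly_MA MA_bot using finMA gnot
    by (simp add: sum.reindex[OF injMA] comp_def)
  have eg: "{aa. aa = g \<and> basic S' le' aa} = {}" using g_not_basic by auto
  have Fg: "Fw S' le' x y {g} = y ^ ?n" unfolding Fw_def using cPg by (simp add: eg)
  have "(\<Sum>A\<in>MA S le. Fw S' le' x y (f ` A)) = Lpoly S le x y"
    unfolding Lpoly_MA using Fw_f by (intro sum.cong) auto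
  then have "Lpoly S' le' x y = Lpoly S le x y + y ^ card S"
    unfolding L1 Fg by (simp add: add.commute)
  then show ?thesis using inv0' invs' by simp
qed

end

lemma upper_assoc_ne: "upper S le a \<Longrightarrow> assoc_basic S le a \<noteq> {}"
  unfolding upper_def assoc_basic_def pcomp_def plt_def by auto

locale unext =
  fixes S :: "'b set" and le :: "'b \<Rightarrow> 'b \<Rightarrow> bool" and T :: "'e set" and leT :: "'e \<Rightarrow> 'e \<Rightarrow> bool"
    and S' :: "'c set" and le' :: "'c \<Rightarrow> 'c \<Rightarrow> bool"
    and f :: "'b \<Rightarrow> 'c" and h :: "'e \<Rightarrow> 'c"
  assumes injf: "inj f" and injh: "inj h" and fh: "\<And>a b. f a \<noteq> h b" and S'_eq: "S' = f ` S \<union> h ` T"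
    and lff[simp]: "\<And>a b. le' (f a) (f b) = le a b"
    and lhh[simp]: "\<And>a b. le' (h a) (h b) = leT a b"
    and lfh[simp]: "\<And>a b. le' (f a) (h b) = False"
    and lhf[simp]: "\<And>a b. le' (h a) (f b) = False"
    and invS: "Inv0 S le" and invT: "Inv0 T leT"
begin

lemma fS[simp]: "f a \<in> S' \<longleftrightarrow> a \<in> S" and hT[simp]: "h b \<in> S' \<longleftrightarrow> b \<in> T"
  and fh1[simp]: "f a \<noteq> h b" and fh2[simp]: "h b \<noteq> f a"
  and feq[simp]: "f a = f a' \<longleftrightarrow> a = a'" and heq[simp]: "h b = h b' \<longleftrightarrow> b = b'"
  using injf injh fh unfolding S'_eq by (auto simp: inj_eq inj_image_mem_iff) (metis fh)+

lemma Ball_S': "(\<forall>z\<in>S'. P z) = ((\<forall>a\<in>S. P (f a)) \<and> (\<forall>b\<in>T. P (h b)))" unfolding S'_eq by (simp add: ball_Un bex_Un)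
lemma Bex_S': "(\<exists>z\<in>S'. P z) = ((\<exists>a\<in>S. P (f a)) \<or> (\<exists>b\<in>T. P (h b)))" unfolding S'_eq by (simp add: ball_Un bex_Un)
lemma Collect_S': "{z\<in>S'. P z} = f ` {a\<in>S. P (f a)} \<union> h ` {b\<in>T. P (h b)}" unfolding S'_eq by auto
lemma S'_cases: "z \<in> S' \<Longrightarrow> (\<And>a. a \<in> S \<Longrightarrow> z = f a \<Longrightarrow> P) \<Longrightarrow> (\<And>b. b \<in> T \<Longrightarrow> z = h b \<Longrightarrow> P) \<Longrightarrow> P"
  unfolding S'_eq by auto

lemma plt_simps[simp]: "plt le' (f a) (f b) = plt le a b" "plt le' (h c) (h d) = plt leT c d"
  "plt le' (f a) (h d) = False" "plt le' (h c) (f b) = False"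
  unfolding plt_def by auto

lemma pcomp_simps[simp]: "pcomp le' (f a) (f b) = pcomp le a b" "pcomp le' (h c) (h d) = pcomp leT c d"
  "pcomp le' (f a) (h d) = False" "pcomp le' (h c) (f b) = False"
  unfolding pcomp_def by auto

lemma finS: "finite S" and poS: "po S le" and finT: "finite T" and poT: "po T leT"
  using invS invT Inv0D by auto

lemma t4: "(\<forall>a\<in>S'. \<forall>b\<in>S'. le' a b \<and> le' b a \<longrightarrow> a = b) = ((\<forall>a\<in>S. \<forall>b\<in>S. le a b \<and> le b a \<longrightarrow> a = b) \<and> (\<forall>a\<in>T. \<forall>b\<in>T. leT a b \<and> leT b a \<longrightarrow> a = b))" unfolding S'_eq by (simp add: ball_Un bex_Un)
lemma t5: "(\<forall>a\<in>S'. \<forall>b\<in>S'. \<forall>c\<in>S'. le' a b \<and> le' b c \<longrightarrow> le' a c) = ((\<forall>a\<in>S. \<forall>b\<in>S. \<forall>c\<in>S. le a b \<and> le b c \<longrightarrow> le a c) \<and> (\<forall>a\<in>T. \<forall>b\<in>T. \<forall>c\<in>T. leT a b \<and> leT b c \<longrightarrow> leT a c))" unfolding S'_eq by (simp add: ball_Un bex_Un)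
lemma t3: "(\<forall>a\<in>S'. le' a a) = ((\<forall>a\<in>S. le a a) \<and> (\<forall>a\<in>T. leT a a))" unfolding S'_eq by (simp add: ball_Un bex_Un)
lemma po': "po S' le'"
  using poS poT unfolding po_def t3 t4 t5 by blast

lemma fin': "finite S'" using finS finT unfolding S'_eq by (simp add: ball_Un bex_Un)

lemma basic_f[simp]: "basic S' le' (f a) = basic S le a"
  by (cases "a \<in> S") (simp_all add: basic_def Ball_S' Bex_S')
lemma basic_h[simp]: "basic S' le' (h b) = basic T leT b"
  by (cases "b \<in> T") (simp_all add: basic_def Ball_S' Bex_S')

lemma allb_eq: "allb S' le' = f ` allb S le \<union> h ` allb T leT"
  unfolding allb_def by (simp add: Collect_S')

lemma assoc_f: "assoc_basic S' le' (f a) = f ` assoc_basic S le a"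
  unfolding assoc_basic_def by (simp add: Collect_S')
lemma assoc_h: "assoc_basic S' le' (h b) = h ` assoc_basic T leT b"
  unfolding assoc_basic_def by (simp add: Collect_S')

lemma lower_f[simp]: "lower S' le' (f a) = lower S le a"
  unfolding lower_def by (simp add: Bex_S')
lemma upper_f[simp]: "upper S' le' (f a) = upper S le a"
  unfolding upper_def by (simp add: Bex_S')
lemma lower_h[simp]: "lower S' le' (h a) = lower T leT a"
  unfolding lower_def by (simp add: Bex_S')
lemma upper_h[simp]: "upper S' le' (h a) = upper T leT a"
  unfolding upper_def by (simp add: Bex_S')

lemma univ_f: "univ S' le' (f a) = (univ S le a \<and> T = {})"
  unfolding univ_def by (simp add: Ball_S')
lemma univ_h: "univ S' le' (h b) = (univ T leT b \<and> S = {})"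
  unfolding univ_def by (auto simp: Ball_S')


lemma Pset_f: assumes aS: "a \<in> S" shows "Pset S' le' (f a) = f ` Pset S le a"
proof -
  have Pl: "{b\<in>S'. plt le' (f a) b \<and> \<not> (\<exists>c\<in>S'. plt le' c b \<and> \<not> pcomp le' c (f a))}
   = f ` {b\<in>S. plt le a b \<and> \<not> (\<exists>c\<in>S. plt le c b \<and> \<not> pcomp le c a)}"
    by (simp add: Collect_S' Bex_S')
  have P1: "{b\<in>S'. plt le' b (f a) \<and> \<not> (\<exists>c\<in>S'. plt le' b c \<and> \<not> pcomp le' c (f a))}
   = f ` {b\<in>S. plt le b a \<and> \<not> (\<exists>c\<in>S. plt le b c \<and> \<not> pcomp le c a)}"
    by (simp add: Collect_S' Bex_S')
  have P2: "{l\<in>S'. lower S' le' l \<and> assoc_basic S' le' l = assoc_basic S' le' (f a)}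
    = f ` {l\<in>S. lower S le l \<and> assoc_basic S le l = assoc_basic S le a}
      \<union> h ` {l\<in>T. lower T leT l \<and> h ` assoc_basic T leT l = f ` assoc_basic S le a}"
    by (simp add: Collect_S' assoc_f assoc_h inj_image_eq_iff[OF injf])
  have Pu: "f ` X - (f ` Y \<union> h ` Z) = f ` (X - Y)" for X Y Z
    by (auto simp: image_set_diff[OF injf])
  show ?thesis unfolding Pset_def Pl P1 P2 Pu using aS by simp
qed

lemma Pset_h: assumes bT: "b \<in> T" shows "Pset S' le' (h b) = h ` Pset T leT b"
proof -
  have Pl: "{c\<in>S'. plt le' (h b) c \<and> \<not> (\<exists>d\<in>S'. plt le' d c \<and> \<not> pcomp le' d (h b))}
   = h ` {c\<in>T. plt leT b c \<and> \<not> (\<exists>d\<in>T. plt leT d c \<and> \<not> pcomp leT d b)}"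
    by (simp add: Collect_S' Bex_S')
  have P1: "{c\<in>S'. plt le' c (h b) \<and> \<not> (\<exists>d\<in>S'. plt le' c d \<and> \<not> pcomp le' d (h b))}
   = h ` {c\<in>T. plt leT c b \<and> \<not> (\<exists>d\<in>T. plt leT c d \<and> \<not> pcomp leT d b)}"
    by (simp add: Collect_S' Bex_S')
  have P2: "{l\<in>S'. lower S' le' l \<and> assoc_basic S' le' l = assoc_basic S' le' (h b)}
    = f ` {l\<in>S. lower S le l \<and> f ` assoc_basic S le l = h ` assoc_basic T leT b}
      \<union> h ` {l\<in>T. lower T leT l \<and> assoc_basic T leT l = assoc_basic T leT b}"
    by (simp add: Collect_S' assoc_f assoc_h inj_image_eq_iff[OF injh])
  have Pu: "h ` X - (f ` Z \<union> h ` Y) = h ` (X - Y)" for X Y Z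
    by (auto simp: image_set_diff[OF injh])
  show ?thesis unfolding Pset_def Pl P1 P2 Pu using bT by simp
qed

lemma mac: assumes AS: "A \<subseteq> S" and BT: "B \<subseteq> T"
  shows "max_antichain S' le' (f ` A \<union> h ` B) = (max_antichain S le A \<and> max_antichain T leT B)"
proof -
  have 1: "f ` A \<union> h ` B \<subseteq> S'" using AS BT unfolding S'_eq by auto
  have 2: "(\<forall>u\<in>f ` A \<union> h ` B. \<forall>v\<in>f ` A \<union> h ` B. u \<noteq> v \<longrightarrow> \<not> pcomp le' u v) =
     ((\<forall>u\<in>A. \<forall>v\<in>A. u \<noteq> v \<longrightarrow> \<not> pcomp le u v) \<and> (\<forall>u\<in>B. \<forall>v\<in>B. u \<noteq> v \<longrightarrow> \<not> pcomp leT u v))"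
    by (simp add: ball_Un)
  have mem1: "f z \<in> f ` A \<union> h ` B \<longleftrightarrow> z \<in> A" for z
    by (auto simp: inj_image_mem_iff[OF injf])
  have mem2: "h z \<in> f ` A \<union> h ` B \<longleftrightarrow> z \<in> B" for z
    by (auto simp: inj_image_mem_iff[OF injh])
  have 3: "(\<forall>z\<in>S' - (f ` A \<union> h ` B). \<exists>a\<in>f ` A \<union> h ` B. pcomp le' z a) =
    ((\<forall>z\<in>S - A. \<exists>a\<in>A. pcomp le z a) \<and> (\<forall>z\<in>T - B. \<exists>a\<in>B. pcomp leT z a))"
  proof -
    have "(\<forall>z\<in>S' - (f ` A \<union> h ` B). \<exists>a\<in>f ` A \<union> h ` B. pcomp le' z a)
      = (\<forall>z\<in>S'. z \<notin> f ` A \<union> h ` B \<longrightarrow> (\<exists>a\<in>f ` A \<union> h ` B. pcomp le' z a))" by blast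
    also have "\<dots> = ((\<forall>z\<in>S. z \<notin> A \<longrightarrow> (\<exists>a\<in>A. pcomp le z a)) \<and> (\<forall>z\<in>T. z \<notin> B \<longrightarrow> (\<exists>a\<in>B. pcomp leT z a)))"
      unfolding Ball_S' mem1 mem2 by (simp add: bex_Un)
    also have "\<dots> = ((\<forall>z\<in>S - A. \<exists>a\<in>A. pcomp le z a) \<and> (\<forall>z\<in>T - B. \<exists>a\<in>B. pcomp leT z a))" by blast
    finally show ?thesis .
  qed
  show ?thesis unfolding max_antichain_def 2 3 by (simp only: 1 AS BT simp_thms) argo
qed

lemma MA_un: "MA S' le' = (\<lambda>(A, B). f ` A \<union> h ` B) ` (MA S le \<times> MA T leT)"
proof (intro equalityI subsetI)
  fix A' assume A': "A' \<in> MA S' le'"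
  then have sub: "A' \<subseteq> S'" unfolding MA_def max_antichain_def by auto
  define A where "A = {a\<in>S. f a \<in> A'}"
  define B where "B = {b\<in>T. h b \<in> A'}"
  have AS: "A \<subseteq> S" and BT: "B \<subseteq> T" unfolding A_def B_def by auto
  have eq: "A' = f ` A \<union> h ` B" using sub unfolding A_def B_def S'_eq by auto
  have "A \<in> MA S le" "B \<in> MA T leT" using A' mac[OF AS BT] unfolding eq MA_def by auto
  then show "A' \<in> (\<lambda>(A, B). f ` A \<union> h ` B) ` (MA S le \<times> MA T leT)" using eq by blast
next
  fix A' assume "A' \<in> (\<lambda>(A, B). f ` A \<union> h ` B) ` (MA S le \<times> MA T leT)"
  then obtain A B where AB: "A \<in> MA S le" "B \<in> MA T leT" and eq: "A' = f ` A \<union> h ` B" by auto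
  have AS: "A \<subseteq> S" and BT: "B \<subseteq> T" using AB MA_Pow by blast+
  show "A' \<in> MA S' le'" using mac[OF AS BT] AB unfolding eq MA_def by auto
qed

lemma inj_un: "inj_on (\<lambda>(A, B). f ` A \<union> h ` B) X"
proof (rule inj_onI, clarify)
  fix A B A2 B2 assume e: "f ` A \<union> h ` B = f ` A2 \<union> h ` B2"
  have m1: "f z \<in> f ` C \<union> h ` D \<longleftrightarrow> z \<in> C" for z C D by (auto simp: inj_image_mem_iff[OF injf])
  have m2: "h z \<in> f ` C \<union> h ` D \<longleftrightarrow> z \<in> D" for z C D by (auto simp: inj_image_mem_iff[OF injh])
  have "A = A2" using m1[of _ A B] m1[of _ A2 B2] e by blast
  moreover have "B = B2" using m2[of _ A B] m2[of _ A2 B2] e by blast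
  ultimately show "A = A2 \<and> B = B2" by simp
qed

lemma Fw_un: assumes A: "A \<in> MA S le" and B: "B \<in> MA T leT"
  shows "Fw S' le' x y (f ` A \<union> h ` B) = Fw S le x y A * Fw T leT x y B"
proof -
  have AS: "A \<subseteq> S" and BT: "B \<subseteq> T" using A B MA_Pow by blast+
  have fA: "finite A" "finite B" using finite_subset[OF AS finS] finite_subset[OF BT finT] by auto
  have dis: "f ` A \<inter> h ` B = {}" by auto
  have "{b\<in>f ` A \<union> h ` B. basic S' le' b} = f ` {a\<in>A. basic S le a} \<union> h ` {b\<in>B. basic T leT b}" by auto
  moreover have "card (f ` {a\<in>A. basic S le a} \<union> h ` {b\<in>B. basic T leT b}) =
     card (f ` {a\<in>A. basic S le a}) + card (h ` {b\<in>B. basic T leT b})"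
    by (rule card_Un_disjoint) (use fA in auto)
  ultimately have c: "card {b\<in>f ` A \<union> h ` B. basic S' le' b} = card {a\<in>A. basic S le a} + card {b\<in>B. basic T leT b}"
    by (simp add: card_image[OF inj_on_subset[OF injf subset_UNIV]]
        card_image[OF inj_on_subset[OF injh subset_UNIV]])
  have "(\<Sum>z\<in>f ` A \<union> h ` B. card (Pset S' le' z)) = (\<Sum>z\<in>f ` A. card (Pset S' le' z)) + (\<Sum>z\<in>h ` B. card (Pset S' le' z))"
    using fA dis by (simp add: sum.union_disjoint)
  also have "(\<Sum>z\<in>f ` A. card (Pset S' le' z)) = (\<Sum>a\<in>A. card (Pset S le a))"
  proof -
    have "(\<Sum>z\<in>f ` A. card (Pset S' le' z)) = (\<Sum>a\<in>A. card (Pset S' le' (f a)))"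
      using sum.reindex[OF inj_on_subset[OF injf subset_UNIV], of "\<lambda>b. card (Pset S' le' b)" A] by (simp add: comp_def)
    also have "\<dots> = (\<Sum>a\<in>A. card (Pset S le a))"
    proof (rule sum.cong)
      fix a assume "a \<in> A"
      then have "a \<in> S" using AS by auto
      then show "card (Pset S' le' (f a)) = card (Pset S le a)"
        using Pset_f card_image[OF inj_on_subset[OF injf subset_UNIV]] by simp
    qed simp
    finally show ?thesis .
  qed
  also have "(\<Sum>z\<in>h ` B. card (Pset S' le' z)) = (\<Sum>b\<in>B. card (Pset T leT b))"
  proof -
    have "(\<Sum>z\<in>h ` B. card (Pset S' le' z)) = (\<Sum>b\<in>B. card (Pset S' le' (h b)))"
      using sum.reindex[OF inj_on_subset[OF injh subset_UNIV], of "\<lambda>b. card (Pset S' le' b)" B] by (simp add: comp_def)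
    also have "\<dots> = (\<Sum>b\<in>B. card (Pset T leT b))"
    proof (rule sum.cong)
      fix b assume "b \<in> B"
      then have "b \<in> T" using BT by auto
      then show "card (Pset S' le' (h b)) = card (Pset T leT b)"
        using Pset_h card_image[OF inj_on_subset[OF injh subset_UNIV]] by simp
    qed simp
    finally show ?thesis .
  qed
  finally show ?thesis unfolding Fw_def c by (simp add: power_add algebra_simps)
qed

lemma un_main:
  fixes x y :: "'d::comm_ring_1"
  assumes invsS: "InvS S le y" and invsT: "InvS T leT y"
  shows "Inv0 S' le' \<and> InvS S' le' y \<and> Lpoly S' le' x y = Lpoly S le x y * Lpoly T leT x y"
proof -
  have inv0': "Inv0 S' le'"
    unfolding Inv0_def
  proof (intro conjI ballI impI)
    show "finite S'" by (rule fin')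
    show "po S' le'" by (rule po')
    assume "S' \<noteq> {}"
    then have "S \<noteq> {} \<or> T \<noteq> {}" unfolding S'_eq by auto
    then show "allb S' le' \<noteq> {}" using Inv0D(3)[OF invS] Inv0D(3)[OF invT] allb_eq by auto
  next
    fix l assume lS: "l \<in> S'" and hl: "lower S' le' l \<and> assoc_basic S' le' l = allb S' le'"
    show "univ S' le' l" using lS
    proof (rule S'_cases)
      fix a assume aS: "a \<in> S" and la: "l = f a"
      have lo: "lower S le a" using hl la by simp
      have e: "f ` assoc_basic S le a = f ` allb S le \<union> h ` allb T leT"
        using hl la assoc_f allb_eq by simp
      then have "\<forall>x\<in>allb T leT. h x \<in> f ` assoc_basic S le a" by blast
      then have AT: "allb T leT = {}" by auto
      then have T0: "T = {}" using Inv0D(3)[OF invT] by auto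
      have "assoc_basic S le a = allb S le" using e AT inj_image_eq_iff[OF injf] by simp
      then have "univ S le a" using Inv0D(4)[OF invS aS lo] by blast
      then show ?thesis using univ_f la T0 by simp
    next
      fix b assume bT: "b \<in> T" and lb: "l = h b"
      have lo: "lower T leT b" using hl lb by simp
      have e: "h ` assoc_basic T leT b = f ` allb S le \<union> h ` allb T leT"
        using hl lb assoc_h allb_eq by simp
      then have "\<forall>x\<in>allb S le. f x \<in> h ` assoc_basic T leT b" by blast
      then have AS: "allb S le = {}" by auto
      then have S0: "S = {}" using Inv0D(3)[OF invS] by auto
      have "assoc_basic T leT b = allb T leT" using e AS inj_image_eq_iff[OF injh] by simp
      then have "univ T leT b" using Inv0D(4)[OF invT bT lo] by blast
      then show ?thesis using univ_h lb S0 by simp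
    qed
  qed
  have ULe: "UL S' le' = f ` {a\<in>S. lower S le a \<and> univ S le a \<and> T = {}} \<union> h ` {b\<in>T. lower T leT b \<and> univ T leT b \<and> S = {}}"
    unfolding UL_def Collect_S' univ_f univ_h by simp
  have invs': "InvS S' le' y"
  proof (cases "T = {}")
    case T0: True
    have U: "UL S' le' = f ` UL S le" using ULe T0 by (simp add: UL_def[of S le])
    have cS: "card S' = card S" unfolding S'_eq T0 by (simp add: card_image[OF inj_on_subset[OF injf subset_UNIV]])
    have cU: "card (UL S' le') = card (UL S le)" unfolding U by (simp add: card_image[OF inj_on_subset[OF injf subset_UNIV]])
    have "(\<Sum>b\<in>UL S' le'. y ^ card (Pset S' le' b)) = (\<Sum>a\<in>UL S le. y ^ card (Pset S' le' (f a)))"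
      unfolding U using sum.reindex[OF inj_on_subset[OF injf subset_UNIV], of "\<lambda>b. y ^ card (Pset S' le' b)" "UL S le"]
      by (simp add: comp_def)
    also have "\<dots> = (\<Sum>a\<in>UL S le. y ^ card (Pset S le a))"
    proof (rule sum.cong)
      fix a assume "a \<in> UL S le"
      then have "a \<in> S" unfolding UL_def by auto
      then show "y ^ card (Pset S' le' (f a)) = y ^ card (Pset S le a)"
        using Pset_f card_image[OF inj_on_subset[OF injf subset_UNIV]] by simp
    qed simp
    finally show ?thesis using invsS unfolding InvS_def cS cU by simp
  next
    case T1: False
    show ?thesis
    proof (cases "S = {}")
      case S0: True
      have U: "UL S' le' = h ` UL T leT" using ULe S0 by (simp add: UL_def[of T leT])
      have cS: "card S' = card T" unfolding S'_eq S0 by (simp add: card_image[OF inj_on_subset[OF injh subset_UNIV]])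
      have cU: "card (UL S' le') = card (UL T leT)" unfolding U by (simp add: card_image[OF inj_on_subset[OF injh subset_UNIV]])
      have "(\<Sum>b\<in>UL S' le'. y ^ card (Pset S' le' b)) = (\<Sum>a\<in>UL T leT. y ^ card (Pset S' le' (h a)))"
        unfolding U using sum.reindex[OF inj_on_subset[OF injh subset_UNIV], of "\<lambda>b. y ^ card (Pset S' le' b)" "UL T leT"]
        by (simp add: comp_def)
      also have "\<dots> = (\<Sum>a\<in>UL T leT. y ^ card (Pset T leT a))"
      proof (rule sum.cong)
        fix a assume "a \<in> UL T leT"
        then have "a \<in> T" unfolding UL_def by auto
        then show "y ^ card (Pset S' le' (h a)) = y ^ card (Pset T leT a)"
          using Pset_h card_image[OF inj_on_subset[OF injh subset_UNIV]] by simp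
      qed simp
      finally show ?thesis using invsT unfolding InvS_def cS cU by simp
    next
      case S1: False
      have "UL S' le' = {}" unfolding ULe using S1 T1 by simp
      then show ?thesis unfolding InvS_def by simp
    qed
  qed
  have finMA: "finite (MA S le)" "finite (MA T leT)" using finite_MA[OF finS] finite_MA[OF finT] by auto
  have "Lpoly S' le' x y = (\<Sum>p\<in>MA S le \<times> MA T leT. Fw S' le' x y ((\<lambda>(A, B). f ` A \<union> h ` B) p))"
    unfolding Lpoly_MA MA_un by (rule sum.reindex[OF inj_un, unfolded comp_def])
  also have "\<dots> = (\<Sum>p\<in>MA S le \<times> MA T leT. Fw S le x y (fst p) * Fw T leT x y (snd p))"
    by (rule sum.cong) (auto simp: Fw_un)
  also have "\<dots> = Lpoly S le x y * Lpoly T leT x y"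
    unfolding Lpoly_MA sum_product sum.cartesian_product by (simp add: case_prod_beta)
  finally show ?thesis using inv0' invs' by simp
qed

end

lemma single_L:
  fixes x y :: "'d::comm_ring_1"
  assumes "le z z"
  shows "Inv0 {z} le \<and> InvS {z} le y \<and> Lpoly {z} le x y = x"
proof -
  have "po {z} le" unfolding po_def using assms by auto
  moreover have "ischain {z} le" unfolding ischain_def pcomp_def using assms by auto
  ultimately show ?thesis using chain_L[of "{z}" le y x] by simp
qed

lemma empty_L:
  fixes x y :: "'d::comm_ring_1"
  shows "Inv0 {} le \<and> InvS {} le y \<and> Lpoly {} le x y = 1"
proof -
  have "MA {} le = {{}}" unfolding MA_def max_antichain_def by auto
  then have "Lpoly {} le x y = 1" unfolding Lpoly_MA Fw_def by simp
  moreover have "Inv0 {} le" unfolding Inv0_def po_def by simp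
  moreover have "UL {} le = {}" unfolding UL_def by simp
  then have "InvS {} le y" unfolding InvS_def by simp
  ultimately show ?thesis by simp
qed

lemma velems_fin: "finite (velems t)"
  by (induction t) auto

theorem main_inv:
  fixes x y :: "'d::comm_ring_1"
  shows "Inv0 (velems t) (vle t) \<and> InvS (velems t) (vle t) y \<and> vpoly t x y = Lpoly (velems t) (vle t) x y"
proof (induction t)
  case VEmpty
  show ?case using empty_L[of "\<lambda>a b. False" y x] by simp
next
  case (VUnion s t)
  interpret unext "velems s" "vle s" "velems t" "vle t" "velems (VUnion s t)" "vle (VUnion s t)" "Cons 0" "Cons 1"
    by unfold_locales (use VUnion.IH in auto)
  show ?case using un_main[of y x] VUnion.IH by (simp del: vle.simps velems.simps)
next
  case (VTop t)
  show ?case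
  proof (cases "velems t = {}")
    case True
    have e: "velems (VTop t) = {[1]}" using True by simp
    have "vle (VTop t) [1] [1]" by simp
    then show ?thesis using single_L[of "vle (VTop t)" "[1]" y x] True unfolding e by (simp del: vle.simps)
  next
    case False
    interpret topext "velems t" "vle t" "velems (VTop t)" "vle (VTop t)" "Cons 0" "[1]"
      by unfold_locales (use VTop.IH False in auto)
    show ?thesis using top_main[of y x] VTop.IH False by (simp del: vle.simps velems.simps)
  qed
next
  case (VBot t)
  show ?case
  proof (cases "velems t = {}")
    case True
    have e: "velems (VBot t) = {[1]}" using True by simp
    have "vle (VBot t) [1] [1]" by simp
    then show ?thesis using single_L[of "vle (VBot t)" "[1]" y x] True unfolding e by (simp del: vle.simps)
  next
    case ne: False
    interpret botbase "velems t" "vle t" "velems (VBot t)" "vle (VBot t)" "Cons 0" "[1]"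
      by unfold_locales (use VBot.IH Inv0D in auto)
    show ?thesis
    proof (cases "ischain (velems t) (vle t)")
      case ch: True
      have ne': "velems (VBot t) \<noteq> {}" by simp
      have c1: "Lpoly (velems t) (vle t) x y = x + (\<Sum>k\<in>{1..<card (velems t)}. y ^ k)"
        using chain_L[OF finb pob ch ne, of y x] by simp
      have c2: "Inv0 (velems (VBot t)) (vle (VBot t)) \<and> InvS (velems (VBot t)) (vle (VBot t)) y \<and>
          Lpoly (velems (VBot t)) (vle (VBot t)) x y = x + (\<Sum>k\<in>{1..<card (velems (VBot t))}. y ^ k)"
        using chain_L[OF fin' po' chain'[OF ch] ne', of y x] by simp
      have n1: "1 \<le> card (velems t)" using ne finb by (simp add: Suc_le_eq card_gt_0_iff)
      have "Lpoly (velems (VBot t)) (vle (VBot t)) x y = Lpoly (velems t) (vle t) x y + y ^ card (velems t)"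
        using c2 unfolding c1 card' using n1 by (simp add: sum.atLeastLessThan_Suc)
      then show ?thesis using c2 VBot.IH ne by (simp del: vle.simps velems.simps)
    next
      case nch: False
      interpret botext "velems t" "vle t" "velems (VBot t)" "vle (VBot t)" "Cons 0" "[1]"
        by unfold_locales (use VBot.IH nch in auto)
      show ?thesis using bot_main[of y x] VBot.IH ne by (simp del: vle.simps velems.simps)
    qed
  qed
qed

theorem theorem3p17:
  fixes t :: vterm and x y :: "'a::comm_ring_1"
  shows "vpoly t x y = Lpoly (velems t) (vle t) x y"
  using main_inv[of t y x] by simp

end
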